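(* Let $\sigma\ge0$, $\gamma>0$, $V=\sqrt{1+\sigma}$, let $(n^\varepsilon,u^\varepsilon,\phi^\varepsilon)$ be the solitary wave solution, and set $\widetilde N_\varepsilon=\frac{n^\varepsilon-1}{\varepsilon}$, $\widetilde E_\varepsilon=\frac{-(\phi^\varepsilon)'}{\varepsilon}$. There exist constants $C_*,\varepsilon_1>0$ and, for each non-negative integer $k$, a constant $C_k>0$ ($C_*,\varepsilon_1$ independent of $k$; all independent of $\varepsilon$ and $\xi$) such that for all $0<\varepsilon<\varepsilon_1$ and all $\xi\ge0$, \[ |\widetilde N_\varepsilon^{(k)}(\xi)|+|\widetilde E_\varepsilon^{(k)}(\xi)|\le C_ke^{-C_*\xi},\qquad \frac{|(u^\varepsilon)^{(k)}(\xi)|}{\varepsilon}+\frac{|(\phi^\varepsilon)^{(k)}(\xi)|}{\varepsilon}\le C_ke^{-C_*\xi}, \] where $f^{(k)}$ denotes the $k$-th derivative in $\xi$.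
   Context: For $\varepsilon>0$, consider the system in $\xi\in\mathbb{R}$: $-(V+\gamma\varepsilon)n'+(nu)'=0$, $-(V+\gamma\varepsilon)u'+uu'+\sigma n'/n=-\phi'$, $\varepsilon\phi''=e^\phi-n$, with $n\to1,u\to0,\phi\to0$ as $|\xi|\to\infty$. With $V=\sqrt{1+\sigma}$, for all sufficiently small $\varepsilon>0$ it has a non-trivial smooth solution unique up to translation; the "solitary wave solution" $(n^\varepsilon,u^\varepsilon,\phi^\varepsilon)$ is the translate that is even in $\xi$ and has all components strictly decreasing on $(0,\infty)$. *)

theory Defs
  imports "HOL-Analysis.Analysis"
begin

definition smooth_fun :: "(real \<Rightarrow> real) \<Rightarrow> bool" where
  "smooth_fun f \<longleftrightarrow> (\<forall>k x. ((deriv ^^ k) f) differentiable (at x))"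

definition tw_solution ::
  "real \<Rightarrow> real \<Rightarrow> real \<Rightarrow> real \<Rightarrow> (real \<Rightarrow> real) \<Rightarrow> (real \<Rightarrow> real) \<Rightarrow> (real \<Rightarrow> real) \<Rightarrow> bool" where
  "tw_solution \<sigma> \<gamma> V \<epsilon> n u \<phi> \<longleftrightarrow>
     smooth_fun n \<and> smooth_fun u \<and> smooth_fun \<phi> \<and>
     (\<forall>\<xi>. n \<xi> > 0) \<and>
     (\<forall>\<xi>. - (V + \<gamma> * \<epsilon>) * deriv n \<xi> + deriv (\<lambda>x. n x * u x) \<xi> = 0) \<and>
     (\<forall>\<xi>. - (V + \<gamma> * \<epsilon>) * deriv u \<xi> + u \<xi> * deriv u \<xi> + \<sigma> * deriv n \<xi> / n \<xi>
            = - deriv \<phi> \<xi>) \<and>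
     (\<forall>\<xi>. \<epsilon> * deriv (deriv \<phi>) \<xi> = exp (\<phi> \<xi>) - n \<xi>) \<and>
     (n \<longlongrightarrow> 1) at_top \<and> (n \<longlongrightarrow> 1) at_bot \<and>
     (u \<longlongrightarrow> 0) at_top \<and> (u \<longlongrightarrow> 0) at_bot \<and>
     (\<phi> \<longlongrightarrow> 0) at_top \<and> (\<phi> \<longlongrightarrow> 0) at_bot"

definition solitary_wave ::
  "real \<Rightarrow> real \<Rightarrow> real \<Rightarrow> (real \<Rightarrow> real) \<Rightarrow> (real \<Rightarrow> real) \<Rightarrow> (real \<Rightarrow> real) \<Rightarrow> bool" where
  "solitary_wave \<sigma> \<gamma> \<epsilon> n u \<phi> \<longleftrightarrow>
     tw_solution \<sigma> \<gamma> (sqrt (1 + \<sigma>)) \<epsilon> n u \<phi> \<and>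
     \<not> (n = (\<lambda>_. 1) \<and> u = (\<lambda>_. 0) \<and> \<phi> = (\<lambda>_. 0)) \<and>
     (\<forall>\<xi>. n (- \<xi>) = n \<xi> \<and> u (- \<xi>) = u \<xi> \<and> \<phi> (- \<xi>) = \<phi> \<xi>) \<and>
     strict_antimono_on {0<..} n \<and> strict_antimono_on {0<..} u \<and> strict_antimono_on {0<..} \<phi>"

end

theory Submission
  imports Defs
begin

definition su :: "nat \<Rightarrow> (real \<Rightarrow> real) \<Rightarrow> bool" where
  "su k f \<longleftrightarrow> (\<forall>j\<le>k. \<forall>x. (deriv ^^ j) f differentiable (at x))"

lemma smooth_su: "smooth_fun f \<longleftrightarrow> (\<forall>k. su k f)"
  unfolding smooth_fun_def su_def by blast

lemma su_mono: "su k f \<Longrightarrow> j \<le> k \<Longrightarrow> su j f"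
  unfolding su_def by auto

lemma su_diff0: "su k f \<Longrightarrow> f differentiable (at x)"
  unfolding su_def by (metis funpow_0 le0)

lemma su_Suc: "su (Suc k) f \<longleftrightarrow> (\<forall>x. f differentiable (at x)) \<and> su k (deriv f)"
proof -
  have e: "(deriv ^^ Suc j) f = (deriv ^^ j) (deriv f)" for j
    by (simp add: funpow_Suc_right del: funpow.simps)
  show ?thesis
    unfolding su_def
  proof safe
    fix j x assume "\<forall>j\<le>Suc k. \<forall>x. (deriv ^^ j) f differentiable at x" "j \<le> k"
    then show "(deriv ^^ j) (deriv f) differentiable at x" by (metis e Suc_le_mono)
  next
    fix x assume "\<forall>j\<le>Suc k. \<forall>x. (deriv ^^ j) f differentiable at x"
    then show "f differentiable at x" by (metis funpow_0 le0)
  next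
    fix j x assume "\<forall>x. f differentiable at x" "\<forall>j\<le>k. \<forall>x. (deriv ^^ j) (deriv f) differentiable at x" "j \<le> Suc k"
    then show "(deriv ^^ j) f differentiable at x"
      by (cases j) (auto simp: e simp del: funpow.simps)
  qed
qed

lemma rdiff_fd: "(f::real\<Rightarrow>real) differentiable at x \<Longrightarrow> f field_differentiable at x"
  by (simp add: field_differentiable_def real_differentiable_def)

lemma deriv_add_fun: "(\<And>x. (f::real\<Rightarrow>real) differentiable at x) \<Longrightarrow> (\<And>x. g differentiable at x) \<Longrightarrow>
   deriv (\<lambda>x. f x + g x) = (\<lambda>x. deriv f x + deriv g x)"
  by (rule ext, rule deriv_add) (metis rdiff_fd)+

lemma deriv_mult_fun: "(\<And>x. (f::real\<Rightarrow>real) differentiable at x) \<Longrightarrow> (\<And>x. g differentiable at x) \<Longrightarrow>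
   deriv (\<lambda>x. f x * g x) = (\<lambda>x. f x * deriv g x + deriv f x * g x)"
  by (rule ext, rule deriv_mult) (metis rdiff_fd)+

lemma deriv_cmult_fun: "(\<And>x. (f::real\<Rightarrow>real) differentiable at x) \<Longrightarrow>
   deriv (\<lambda>x. a * f x) = (\<lambda>x. a * deriv f x)"
  by (rule ext, rule deriv_cmult) (metis rdiff_fd)+

lemma hd_add: "su k f \<Longrightarrow> su k g \<Longrightarrow> j \<le> Suc k \<Longrightarrow>
   (deriv ^^ j) (\<lambda>x. f x + g x) = (\<lambda>x. (deriv ^^ j) f x + (deriv ^^ j) g x)"
proof (induction j)
  case 0 then show ?case by simp
next
  case (Suc j)
  then have "j \<le> k" by simp
  with Suc.prems have "\<And>x. (deriv ^^ j) f differentiable at x" "\<And>x. (deriv ^^ j) g differentiable at x"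
    unfolding su_def by auto
  then show ?case using Suc by (simp add: deriv_add_fun)
qed

lemma hd_cmult: "su k f \<Longrightarrow> j \<le> Suc k \<Longrightarrow>
   (deriv ^^ j) (\<lambda>x. a * f x) = (\<lambda>x. a * (deriv ^^ j) f x)"
proof (induction j)
  case 0 then show ?case by simp
next
  case (Suc j)
  then have "j \<le> k" by simp
  with Suc.prems have "\<And>x. (deriv ^^ j) f differentiable at x"
    unfolding su_def by auto
  then show ?case using Suc by (simp add: deriv_cmult_fun)
qed

lemma hd_const: "j \<ge> 1 \<Longrightarrow> (deriv ^^ j) (\<lambda>x. a) = (\<lambda>x. 0)"
proof (induction j)
  case 0 then show ?case by simp
next
  case (Suc j) then show ?case by (cases j) auto
qed

lemma su_add: "su k f \<Longrightarrow> su k g \<Longrightarrow> su k (\<lambda>x. f x + g x)"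
  unfolding su_def
proof safe
  fix j x assume a: "\<forall>j\<le>k. \<forall>x. (deriv ^^ j) f differentiable at x"
    "\<forall>j\<le>k. \<forall>x. (deriv ^^ j) g differentiable at x" "j \<le> k"
  then have "(deriv ^^ j) (\<lambda>x. f x + g x) = (\<lambda>x. (deriv ^^ j) f x + (deriv ^^ j) g x)"
    by (intro hd_add[of k]) (auto simp: su_def)
  then show "(deriv ^^ j) (\<lambda>x. f x + g x) differentiable at x" using a by simp
qed

lemma su_cmult: "su k f \<Longrightarrow> su k (\<lambda>x. a * f x)"
  unfolding su_def
proof safe
  fix j x assume a: "\<forall>j\<le>k. \<forall>x. (deriv ^^ j) f differentiable at x" "j \<le> k"
  then have "(deriv ^^ j) (\<lambda>x. a * f x) = (\<lambda>x. a * (deriv ^^ j) f x)"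
    by (intro hd_cmult[of k]) (auto simp: su_def)
  then show "(deriv ^^ j) (\<lambda>x. a * f x) differentiable at x" using a by simp
qed

lemma su_const: "su k (\<lambda>x. a)"
  unfolding su_def
proof safe
  fix j x show "(deriv ^^ j) (\<lambda>x. a) differentiable at x"
    by (cases "j = 0") (auto simp: hd_const)
qed

lemma su_mult: "su k f \<Longrightarrow> su k g \<Longrightarrow> su k (\<lambda>x. f x * g x)"
proof (induction k arbitrary: f g)
  case 0 then show ?case by (auto simp: su_def)
next
  case (Suc k)
  from Suc.prems have df: "\<And>x. f differentiable at x" and dg: "\<And>x. g differentiable at x"
    and f1: "su k (deriv f)" and g1: "su k (deriv g)" by (auto simp: su_Suc)
  have f0: "su k f" "su k g" using Suc.prems su_mono by auto
  have "su k (\<lambda>x. f x * deriv g x + deriv f x * g x)"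
    by (intro su_add Suc.IH f0 f1 g1)
  then show ?case using df dg by (simp add: su_Suc deriv_mult_fun)
qed

lemma su_inverse: "su k f \<Longrightarrow> (\<And>x. f x \<noteq> 0) \<Longrightarrow> su k (\<lambda>x. inverse (f x))"
proof (induction k)
  case 0
  have "(\<lambda>x. inverse (f x)) differentiable at x" for x
    using su_diff0[OF 0(1)] 0(2) by (rule differentiable_inverse)
  then show ?case by (simp add: su_def)
next
  case (Suc k)
  from Suc.prems have df: "\<And>x. f differentiable at x" and f1: "su k (deriv f)" by (auto simp: su_Suc)
  have f0: "su k f" using Suc.prems su_mono by auto
  have di: "\<And>x. (\<lambda>x. inverse (f x)) differentiable at x"
    using df Suc.prems(2) by (rule differentiable_inverse)
  have ev: "deriv (\<lambda>x. inverse (f x)) = (\<lambda>x. (- 1) * (deriv f x * (inverse (f x) * inverse (f x))))"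
  proof
    fix x
    have "deriv (\<lambda>x. inverse (f x)) x = - deriv f x / f x ^ 2"
      by (rule deriv_inverse) (use rdiff_fd df Suc.prems(2) in auto)
    also have "\<dots> = (- 1) * (deriv f x * (inverse (f x) * inverse (f x)))"
      by (simp add: power2_eq_square divide_inverse)
    finally show "deriv (\<lambda>x. inverse (f x)) x = (- 1) * (deriv f x * (inverse (f x) * inverse (f x)))" .
  qed
  have "su k (\<lambda>x. (- 1) * (deriv f x * (inverse (f x) * inverse (f x))))"
    by (intro su_cmult su_mult f1 Suc.IH f0 Suc.prems(2))
  then show ?case using di ev by (simp add: su_Suc)
qed

lemma exp_diff: "(f::real\<Rightarrow>real) differentiable at x \<Longrightarrow> (\<lambda>x. exp (f x)) differentiable at x"
proof -
  assume "f differentiable at x"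
  then have "DERIV f x :> deriv f x" by (simp add: DERIV_deriv_iff_real_differentiable)
  then have "DERIV (\<lambda>x. exp (f x)) x :> exp (f x) * deriv f x"
    by (rule DERIV_chain2[OF DERIV_exp])
  then show ?thesis using real_differentiable_def by blast
qed

lemma su_exp: "su k f \<Longrightarrow> su k (\<lambda>x. exp (f x))"
proof (induction k)
  case 0
  have "(\<lambda>x. exp (f x)) differentiable at x" for x
    by (rule exp_diff[OF su_diff0[OF 0(1)]])
  then show ?case by (simp add: su_def)
next
  case (Suc k)
  from Suc.prems have df: "\<And>x. f differentiable at x" and f1: "su k (deriv f)" by (auto simp: su_Suc)
  have f0: "su k f" using Suc.prems su_mono by auto
  have di: "(\<lambda>x. exp (f x)) differentiable at x" for x
    by (rule exp_diff[OF df])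
  have ev: "deriv (\<lambda>x. exp (f x)) = (\<lambda>x. exp (f x) * deriv f x)"
  proof
    fix x
    have "DERIV f x :> deriv f x" using df[of x] by (simp add: DERIV_deriv_iff_real_differentiable)
    then have "DERIV (\<lambda>x. exp (f x)) x :> exp (f x) * deriv f x"
      by (rule DERIV_chain2[OF DERIV_exp])
    then show "deriv (\<lambda>x. exp (f x)) x = exp (f x) * deriv f x" by (rule DERIV_imp_deriv)
  qed
  have "su k (\<lambda>x. exp (f x) * deriv f x)"
    by (intro su_mult f1 Suc.IH f0)
  then show ?case using di ev by (simp add: su_Suc)
qed

definition bd :: "'p set \<Rightarrow> ('p \<Rightarrow> real \<Rightarrow> real) \<Rightarrow> real \<Rightarrow> nat \<Rightarrow> bool" where
  "bd P f a k \<longleftrightarrow> (\<exists>C. \<forall>p\<in>P. \<forall>x\<ge>0. \<bar>(deriv ^^ k) (f p) x\<bar> \<le> C * exp (- a * x))"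

definition sm :: "'p set \<Rightarrow> ('p \<Rightarrow> real \<Rightarrow> real) \<Rightarrow> bool" where
  "sm P f \<longleftrightarrow> (\<forall>p\<in>P. smooth_fun (f p))"

lemma sm_su: "sm P f \<Longrightarrow> p \<in> P \<Longrightarrow> su k (f p)"
  unfolding sm_def smooth_su by blast

lemma smooth_deriv: "smooth_fun f \<Longrightarrow> smooth_fun (deriv f)"
  unfolding smooth_su using su_Suc by blast

lemma smooth_mult: "smooth_fun f \<Longrightarrow> smooth_fun g \<Longrightarrow> smooth_fun (\<lambda>x. f x * g x)"
  unfolding smooth_su using su_mult by blast
lemma smooth_add: "smooth_fun f \<Longrightarrow> smooth_fun g \<Longrightarrow> smooth_fun (\<lambda>x. f x + g x)"
  unfolding smooth_su using su_add by blast
lemma smooth_cmult: "smooth_fun f \<Longrightarrow> smooth_fun (\<lambda>x. a * f x)"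
  unfolding smooth_su using su_cmult by blast
lemma smooth_const: "smooth_fun (\<lambda>x. a)"
  unfolding smooth_su using su_const by blast
lemma smooth_inverse: "smooth_fun f \<Longrightarrow> (\<And>x. f x \<noteq> 0) \<Longrightarrow> smooth_fun (\<lambda>x. inverse (f x))"
  unfolding smooth_su using su_inverse by blast
lemma smooth_exp: "smooth_fun f \<Longrightarrow> smooth_fun (\<lambda>x. exp (f x))"
  unfolding smooth_su using su_exp by blast
lemma smooth_diff0: "smooth_fun f \<Longrightarrow> f differentiable at x"
  unfolding smooth_su using su_diff0 by blast

lemma sm_mult: "sm P f \<Longrightarrow> sm P g \<Longrightarrow> sm P (\<lambda>p x. f p x * g p x)"
  unfolding sm_def using smooth_mult by blast
lemma sm_add: "sm P f \<Longrightarrow> sm P g \<Longrightarrow> sm P (\<lambda>p x. f p x + g p x)"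
  unfolding sm_def using smooth_add by blast
lemma sm_cmult: "sm P f \<Longrightarrow> sm P (\<lambda>p x. s p * f p x)"
  unfolding sm_def using smooth_cmult by blast
lemma sm_const: "sm P (\<lambda>p x. s p)"
  unfolding sm_def using smooth_const by blast
lemma sm_deriv: "sm P f \<Longrightarrow> sm P (\<lambda>p. deriv (f p))"
  unfolding sm_def using smooth_deriv by blast

lemma bd_cong: "(\<And>p x. p \<in> P \<Longrightarrow> f p x = g p x) \<Longrightarrow> bd P f a k = bd P g a k"
proof -
  assume "\<And>p x. p \<in> P \<Longrightarrow> f p x = g p x"
  then have "\<And>p. p \<in> P \<Longrightarrow> f p = g p" by blast
  then show ?thesis unfolding bd_def by (metis (no_types, lifting))
qed

lemma bd0I: "(\<And>p x. p \<in> P \<Longrightarrow> x \<ge> 0 \<Longrightarrow> \<bar>f p x\<bar> \<le> C * exp (- a * x)) \<Longrightarrow> bd P f a 0"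
  unfolding bd_def by auto

lemma bd_add: "sm P f \<Longrightarrow> sm P g \<Longrightarrow> bd P f a k \<Longrightarrow> bd P g a k \<Longrightarrow> bd P (\<lambda>p x. f p x + g p x) a k"
proof -
  assume sf: "sm P f" and sg: "sm P g" and "bd P f a k" "bd P g a k"
  then obtain C1 C2 where c1: "\<forall>p\<in>P. \<forall>x\<ge>0. \<bar>(deriv ^^ k) (f p) x\<bar> \<le> C1 * exp (- a * x)"
    and c2: "\<forall>p\<in>P. \<forall>x\<ge>0. \<bar>(deriv ^^ k) (g p) x\<bar> \<le> C2 * exp (- a * x)" unfolding bd_def by blast
  show ?thesis unfolding bd_def
  proof (intro exI ballI allI impI)
    fix p x assume p: "p \<in> P" and x: "(0::real) \<le> x"
    have "(deriv ^^ k) (\<lambda>x. f p x + g p x) = (\<lambda>x. (deriv ^^ k) (f p) x + (deriv ^^ k) (g p) x)"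
      by (rule hd_add[of k]) (use sm_su[OF sf p] sm_su[OF sg p] in auto)
    then have "\<bar>(deriv ^^ k) (\<lambda>x. f p x + g p x) x\<bar> \<le> \<bar>(deriv ^^ k) (f p) x\<bar> + \<bar>(deriv ^^ k) (g p) x\<bar>"
      by simp
    also have "\<dots> \<le> C1 * exp (- a * x) + C2 * exp (- a * x)" using c1 c2 p x by (meson add_mono)
    finally show "\<bar>(deriv ^^ k) (\<lambda>x. f p x + g p x) x\<bar> \<le> (C1 + C2) * exp (- a * x)"
      by (simp add: distrib_right)
  qed
qed

lemma bd_cmult: "sm P f \<Longrightarrow> bd P f a k \<Longrightarrow> (\<And>p. p \<in> P \<Longrightarrow> \<bar>s p\<bar> \<le> M) \<Longrightarrow> bd P (\<lambda>p x. s p * f p x) a k"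
proof -
  assume sf: "sm P f" and "bd P f a k" and sM: "\<And>p. p \<in> P \<Longrightarrow> \<bar>s p\<bar> \<le> M"
  then obtain C1 where c1: "\<forall>p\<in>P. \<forall>x\<ge>0. \<bar>(deriv ^^ k) (f p) x\<bar> \<le> C1 * exp (- a * x)"
    unfolding bd_def by blast
  show ?thesis unfolding bd_def
  proof (intro exI ballI allI impI)
    fix p x assume p: "p \<in> P" and x: "(0::real) \<le> x"
    have "(deriv ^^ k) (\<lambda>x. s p * f p x) = (\<lambda>x. s p * (deriv ^^ k) (f p) x)"
      by (rule hd_cmult[of k]) (use sm_su[OF sf p] in auto)
    then have "\<bar>(deriv ^^ k) (\<lambda>x. s p * f p x) x\<bar> = \<bar>s p\<bar> * \<bar>(deriv ^^ k) (f p) x\<bar>"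
      by (simp add: abs_mult)
    also have "\<dots> \<le> M * (C1 * exp (- a * x))"
      using c1 p x sM[OF p] by (intro mult_mono) auto
    finally show "\<bar>(deriv ^^ k) (\<lambda>x. s p * f p x) x\<bar> \<le> (M * C1) * exp (- a * x)"
      by simp
  qed
qed

lemma bd_mono: "b \<le> a \<Longrightarrow> bd P f a k \<Longrightarrow> bd P f b k"
proof -
  assume ba: "b \<le> a" and "bd P f a k"
  then obtain C1 where c1: "\<forall>p\<in>P. \<forall>x\<ge>0. \<bar>(deriv ^^ k) (f p) x\<bar> \<le> C1 * exp (- a * x)"
    unfolding bd_def by blast
  show ?thesis unfolding bd_def
  proof (intro exI ballI allI impI)
    fix p x assume p: "p \<in> P" and x: "(0::real) \<le> x"
    have h: "\<bar>(deriv ^^ k) (f p) x\<bar> \<le> C1 * exp (- a * x)" using c1 p x by blast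
    then have "C1 \<ge> 0" by (smt (verit) exp_gt_zero zero_le_mult_iff)
    moreover have "exp (- a * x) \<le> exp (- b * x)" using ba x by (simp add: mult_right_mono)
    ultimately show "\<bar>(deriv ^^ k) (f p) x\<bar> \<le> C1 * exp (- b * x)"
      using h by (meson mult_left_mono order_trans)
  qed
qed

lemma bd_deriv: "bd P (\<lambda>p. deriv (f p)) a k \<longleftrightarrow> bd P f a (Suc k)"
  unfolding bd_def by (simp add: funpow_Suc_right del: funpow.simps)

lemma bd_const: "(\<And>p. p \<in> P \<Longrightarrow> \<bar>s p\<bar> \<le> M) \<Longrightarrow> bd P (\<lambda>p x. s p) 0 k"
proof (cases "k = 0")
  case True
  assume "\<And>p. p \<in> P \<Longrightarrow> \<bar>s p\<bar> \<le> M"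
  then show ?thesis using True unfolding bd_def by (intro exI[of _ M]) auto
next
  case False
  then show ?thesis unfolding bd_def by (intro exI[of _ 0]) (auto simp: hd_const)
qed

lemma bd_mult: "sm P f \<Longrightarrow> sm P g \<Longrightarrow> (\<forall>j\<le>k. bd P f a j) \<Longrightarrow> (\<forall>j\<le>k. bd P g b j) \<Longrightarrow>
   bd P (\<lambda>p x. f p x * g p x) (a + b) k"
proof (induction k arbitrary: f g)
  case 0
  then obtain C1 C2 where c1: "\<forall>p\<in>P. \<forall>x\<ge>0. \<bar>f p x\<bar> \<le> C1 * exp (- a * x)"
    and c2: "\<forall>p\<in>P. \<forall>x\<ge>0. \<bar>g p x\<bar> \<le> C2 * exp (- b * x)" unfolding bd_def by auto
  show ?case unfolding bd_def
  proof (intro exI ballI allI impI)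
    fix p x assume p: "p \<in> P" and x: "(0::real) \<le> x"
    have "\<bar>f p x * g p x\<bar> = \<bar>f p x\<bar> * \<bar>g p x\<bar>" by (simp add: abs_mult)
    also have "\<dots> \<le> (C1 * exp (- a * x)) * (C2 * exp (- b * x))"
      using c1 c2 p x by (meson abs_ge_zero mult_mono order_trans)
    also have "\<dots> = (C1 * C2) * exp (- (a + b) * x)"
      by (simp add: algebra_simps flip: exp_add)
    finally show "\<bar>(deriv ^^ 0) (\<lambda>x. f p x * g p x) x\<bar> \<le> (C1 * C2) * exp (- (a + b) * x)" by simp
  qed
next
  case (Suc k)
  have e: "\<And>p. p \<in> P \<Longrightarrow> deriv (\<lambda>x. f p x * g p x) = (\<lambda>x. f p x * deriv (g p) x + deriv (f p) x * g p x)"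
  proof -
    fix p assume p: "p \<in> P"
    have "smooth_fun (f p)" "smooth_fun (g p)" using Suc.prems(1,2) p unfolding sm_def by auto
    then show "deriv (\<lambda>x. f p x * g p x) = (\<lambda>x. f p x * deriv (g p) x + deriv (f p) x * g p x)"
      by (intro deriv_mult_fun smooth_diff0)
  qed
  have f1: "\<forall>j\<le>k. bd P (\<lambda>p. deriv (f p)) a j" "\<forall>j\<le>k. bd P f a j"
    using Suc.prems(3) unfolding bd_deriv by auto
  have g1: "\<forall>j\<le>k. bd P (\<lambda>p. deriv (g p)) b j" "\<forall>j\<le>k. bd P g b j"
    using Suc.prems(4) unfolding bd_deriv by auto
  have b1: "bd P (\<lambda>p x. f p x * deriv (g p) x) (a + b) k"
    by (rule Suc.IH[OF Suc.prems(1) sm_deriv[OF Suc.prems(2)] f1(2) g1(1)])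
  have b2: "bd P (\<lambda>p x. deriv (f p) x * g p x) (a + b) k"
    by (rule Suc.IH[OF sm_deriv[OF Suc.prems(1)] Suc.prems(2) f1(1) g1(2)])
  have "bd P (\<lambda>p x. f p x * deriv (g p) x + deriv (f p) x * g p x) (a + b) k"
    by (intro bd_add b1 b2 sm_mult sm_deriv Suc.prems(1,2))
  then have "bd P (\<lambda>p. deriv (\<lambda>x. f p x * g p x)) (a + b) k"
    using e by (subst bd_cong[where g = "\<lambda>p x. f p x * deriv (g p) x + deriv (f p) x * g p x"]) auto
  then show ?case by (simp add: bd_deriv)
qed

lemma const_from_deriv:
  fixes G :: "real \<Rightarrow> real"
  assumes "\<And>x. DERIV G x :> 0" and "(G \<longlongrightarrow> L) at_top"
  shows "G x = L"
proof -
  define k where "k = G x"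
  have "\<And>y. G y = k" using assms(1) DERIV_isconst_all k_def by blast
  then have "G = (\<lambda>_. k)" by (rule ext)
  then have "((\<lambda>_::real. k) \<longlongrightarrow> L) at_top" using assms(2) by simp
  then show ?thesis by (simp add: tendsto_const_iff k_def)
qed

definition Hf :: "real \<Rightarrow> real \<Rightarrow> real \<Rightarrow> real" where
  "Hf c s y = c\<^sup>2 / 2 * (1 - 1 / y\<^sup>2) - s * ln y"
definition dHf :: "real \<Rightarrow> real \<Rightarrow> real \<Rightarrow> real" where
  "dHf c s y = c\<^sup>2 / y ^ 3 - s / y"
definition Qf :: "real \<Rightarrow> real \<Rightarrow> real \<Rightarrow> real" where
  "Qf c s y = exp (Hf c s y) - 1 + c\<^sup>2 * (1 / y - 1) + s * (y - 1)"

lemma Hf_deriv: "y > 0 \<Longrightarrow> DERIV (Hf c s) y :> dHf c s y"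
  unfolding Hf_def dHf_def
  by (auto intro!: derivative_eq_intros simp: field_simps power2_eq_square power3_eq_cube)

locale sw =
  fixes \<sigma> \<gamma> \<epsilon> :: real and n u \<phi> :: "real \<Rightarrow> real"
  assumes sig: "\<sigma> \<ge> 0" and gam: "\<gamma> > 0" and eps: "\<epsilon> > 0"
    and sol: "solitary_wave \<sigma> \<gamma> \<epsilon> n u \<phi>"
begin

abbreviation "c \<equiv> sqrt (1 + \<sigma>) + \<gamma> * \<epsilon>"

lemma c_pos: "c > 0" using sig gam eps by (smt (verit) mult_pos_pos real_sqrt_ge_zero)

lemma sm_n: "smooth_fun n" and sm_u: "smooth_fun u" and sm_phi: "smooth_fun \<phi>"
  and n_pos: "\<And>x. n x > 0"
  and eq1: "\<And>x. - c * deriv n x + deriv (\<lambda>x. n x * u x) x = 0"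
  and eq2: "\<And>x. - c * deriv u x + u x * deriv u x + \<sigma> * deriv n x / n x = - deriv \<phi> x"
  and eq3: "\<And>x. \<epsilon> * deriv (deriv \<phi>) x = exp (\<phi> x) - n x"
  and lim_n: "(n \<longlongrightarrow> 1) at_top" and lim_u: "(u \<longlongrightarrow> 0) at_top" and lim_phi: "(\<phi> \<longlongrightarrow> 0) at_top"
  and even: "\<And>x. n (- x) = n x \<and> u (- x) = u x \<and> \<phi> (- x) = \<phi> x"
  and mono_n: "strict_antimono_on {0<..} n" and mono_phi: "strict_antimono_on {0<..} \<phi>"
  using sol unfolding solitary_wave_def tw_solution_def by auto

lemma dn: "n differentiable at x" using sm_n smooth_diff0 by blast
lemma du: "u differentiable at x" using sm_u smooth_diff0 by blast
lemma dphi: "\<phi> differentiable at x" using sm_phi smooth_diff0 by blast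
lemma ddphi: "deriv \<phi> differentiable at x" using sm_phi smooth_diff0 smooth_deriv by blast

lemma Dn: "DERIV n x :> deriv n x" using dn DERIV_deriv_iff_real_differentiable by blast
lemma Du: "DERIV u x :> deriv u x" using du DERIV_deriv_iff_real_differentiable by blast
lemma Dphi: "DERIV \<phi> x :> deriv \<phi> x" using dphi DERIV_deriv_iff_real_differentiable by blast
lemma DDphi: "DERIV (deriv \<phi>) x :> deriv (deriv \<phi>) x" using ddphi DERIV_deriv_iff_real_differentiable by blast

lemma cont_n: "isCont n x" using Dn DERIV_isCont by blast
lemma cont_phi: "isCont \<phi> x" using Dphi DERIV_isCont by blast

lemma u_eq: "u x = c * (1 - 1 / n x)"
proof -
  let ?G = "\<lambda>x. n x * u x - c * n x"
  have d: "DERIV ?G y :> 0" for y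
  proof -
    have "DERIV (\<lambda>x. n x * u x) y :> deriv (\<lambda>x. n x * u x) y"
      using DERIV_deriv_iff_real_differentiable dn du differentiable_mult by blast
    then have "DERIV ?G y :> deriv (\<lambda>x. n x * u x) y - c * deriv n y"
      by (rule DERIV_diff[OF _ DERIV_cmult[OF Dn]])
    moreover have "deriv (\<lambda>x. n x * u x) y - c * deriv n y = 0" using eq1[of y] by linarith
    ultimately show ?thesis by simp
  qed
  have "(?G \<longlongrightarrow> 1 * 0 - c * 1) at_top"
    by (intro tendsto_intros lim_n lim_u)
  then have "(?G \<longlongrightarrow> - c) at_top" by simp
  then have "?G x = - c" by (rule const_from_deriv[OF d])
  then have "u x * n x = c * n x - c" by (simp add: algebra_simps)
  moreover have "n x \<noteq> 0" using n_pos[of x] by simp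
  ultimately have "u x = (c * n x - c) / n x" by (simp add: eq_divide_eq)
  also have "\<dots> = c * (1 - 1 / n x)" using \<open>n x \<noteq> 0\<close> by (simp add: diff_divide_distrib right_diff_distrib)
  finally show ?thesis .
qed

lemma phi_eq: "\<phi> x = Hf c \<sigma> (n x)"
proof -
  let ?G = "\<lambda>x. - c * u x + u x * u x / 2 + \<sigma> * ln (n x) + \<phi> x"
  have d: "DERIV ?G y :> 0" for y
  proof -
    have a1: "DERIV (\<lambda>x. - c * u x) y :> - c * deriv u y" by (rule DERIV_cmult[OF Du])
    have a2: "DERIV (\<lambda>x. u x * u x / 2) y :> (deriv u y * u y + deriv u y * u y) / 2"
      by (rule DERIV_cdivide[OF DERIV_mult[OF Du Du]])
    have a3: "DERIV (\<lambda>x. ln (n x)) y :> 1 / n y * deriv n y"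
      by (rule DERIV_chain2[OF DERIV_ln_divide[OF n_pos] Dn])
    have "DERIV ?G y :> - c * deriv u y + (deriv u y * u y + deriv u y * u y) / 2 + \<sigma> * (1 / n y * deriv n y) + deriv \<phi> y"
      by (intro DERIV_add a1 a2 DERIV_cmult a3 Dphi)
    moreover have "- c * deriv u y + (deriv u y * u y + deriv u y * u y) / 2 + \<sigma> * (1 / n y * deriv n y) + deriv \<phi> y = 0"
      using eq2[of y] by (simp add: field_simps)
    ultimately show ?thesis by simp
  qed
  have "(?G \<longlongrightarrow> - c * 0 + 0 * 0 / 2 + \<sigma> * ln 1 + 0) at_top"
    by (intro tendsto_intros lim_n lim_u lim_phi) auto
  then have "(?G \<longlongrightarrow> 0) at_top" by simp
  then have "?G x = 0" by (rule const_from_deriv[OF d])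
  then have "\<phi> x = c * u x - u x * u x / 2 - \<sigma> * ln (n x)" by (simp add: algebra_simps)
  also have "\<dots> = Hf c \<sigma> (n x)"
  proof -
    have nz: "n x \<noteq> 0" using n_pos[of x] by simp
    define t where "t = 1 / n x"
    have t2: "1 / (n x)\<^sup>2 = t * t" unfolding t_def by (simp add: power2_eq_square)
    have alg: "C * (C * (1 - t)) - C * (1 - t) * (C * (1 - t)) / 2 = C\<^sup>2 / 2 * (1 - t * t)" for C :: real
      by (simp add: power2_eq_square field_simps)
    have "c * (c * (1 - t)) - c * (1 - t) * (c * (1 - t)) / 2 = c\<^sup>2 / 2 * (1 - t * t)"
      by (rule alg)
    then show ?thesis unfolding u_eq Hf_def t2 t_def[symmetric] by simp
  qed
  finally show ?thesis .
qed

end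

lemma sa_dec:
  fixes f :: "real \<Rightarrow> real"
  assumes sa: "strict_antimono_on {0<..} f" and "0 < a" "a < b"
  shows "f b < f a"
proof -
  have "a \<in> {0<..}" "b \<in> {0<..}" using assms by auto
  then show ?thesis using sa \<open>a < b\<close> unfolding monotone_on_def by blast
qed

lemma sa_gt_lim:
  fixes f :: "real \<Rightarrow> real"
  assumes sa: "strict_antimono_on {0<..} f" and lim: "(f \<longlongrightarrow> L) at_top" and x: "x > 0"
  shows "f x > L"
proof -
  have "eventually (\<lambda>y. f y \<le> f (x + 1)) at_top"
    unfolding eventually_at_top_linorder
  proof (intro exI[of _ "x + 1"] allI impI)
    fix y assume y: "x + 1 \<le> y"
    show "f y \<le> f (x + 1)"
    proof (cases "y = x + 1")
      case False
      then show ?thesis using sa_dec[OF sa, of "x + 1" y] x y by simp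
    qed simp
  qed
  then have "L \<le> f (x + 1)" using tendsto_upperbound[OF lim] by simp
  moreover have "f (x + 1) < f x" using sa_dec[OF sa, of x "x + 1"] x by simp
  ultimately show ?thesis by simp
qed

lemma sa_deriv_nonpos:
  fixes f :: "real \<Rightarrow> real"
  assumes sa: "strict_antimono_on {0<..} f" and d: "DERIV f x :> D" and x: "x > 0"
  shows "D \<le> 0"
proof (rule ccontr)
  assume "\<not> D \<le> 0"
  then have "D > 0" by simp
  then obtain d where d0: "d > 0" and h: "\<forall>h>0. h < d \<longrightarrow> f x < f (x + h)"
    using DERIV_pos_inc_right[OF d] by blast
  have "f x < f (x + d / 2)" using h[rule_format, of "d / 2"] d0 by linarith
  moreover have "f (x + d / 2) < f x" using sa_dec[OF sa, of x "x + d / 2"] x d0 by simp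
  ultimately show False by simp
qed

lemma even_deriv0:
  fixes f :: "real \<Rightarrow> real"
  assumes ev: "\<And>x. f (- x) = f x" and d: "DERIV f 0 :> D"
  shows "D = 0"
proof -
  have d': "DERIV f (- 0) :> D" using d by simp
  have "DERIV (\<lambda>x. f (- x)) 0 :> D * (- 1)"
    by (rule DERIV_chain2[OF d' DERIV_minus[OF DERIV_ident]])
  moreover have e: "(\<lambda>x. f (- x)) = f" by (rule ext) (rule ev)
  ultimately have "DERIV f 0 :> D * (- 1)" by (simp only: e)
  then have "D = D * (- 1)" by (rule DERIV_unique[OF d])
  then show ?thesis by linarith
qed

context sw begin

lemma n_gt1: "x > 0 \<Longrightarrow> n x > 1" using sa_gt_lim[OF mono_n lim_n] .
lemma phi_gt0: "x > 0 \<Longrightarrow> \<phi> x > 0" using sa_gt_lim[OF mono_phi lim_phi] .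

lemma n_ge1: "n x \<ge> 1"
proof -
  have "n 0 \<ge> 1"
  proof -
    have "(n \<longlongrightarrow> n 0) (at 0)" using cont_n[of 0] isCont_def by blast
    then have "(n \<longlongrightarrow> n 0) (at_right 0)" using filterlim_at_split by blast
    moreover have "eventually (\<lambda>y. 1 \<le> n y) (at_right (0::real))"
      using eventually_at_right_less[of "0::real"] by (rule eventually_mono) (use n_gt1 in force)
    ultimately show ?thesis by (rule tendsto_lowerbound) simp
  qed
  then show ?thesis using n_gt1[of x] n_gt1[of "- x"] even[of x]
    by (cases "x > 0"; cases "x < 0") auto
qed

lemma phi_ge0: "\<phi> x \<ge> 0"
proof -
  have "\<phi> 0 \<ge> 0"
  proof -
    have "(\<phi> \<longlongrightarrow> \<phi> 0) (at 0)" using cont_phi[of 0] isCont_def by blast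
    then have "(\<phi> \<longlongrightarrow> \<phi> 0) (at_right 0)" using filterlim_at_split by blast
    moreover have "eventually (\<lambda>y. 0 \<le> \<phi> y) (at_right (0::real))"
      using eventually_at_right_less[of "0::real"] by (rule eventually_mono) (use phi_gt0 in force)
    ultimately show ?thesis by (rule tendsto_lowerbound) simp
  qed
  then show ?thesis using phi_gt0[of x] phi_gt0[of "- x"] even[of x]
    by (cases "x > 0"; cases "x < 0") auto
qed

lemma dphi_nonpos: "x \<ge> 0 \<Longrightarrow> deriv \<phi> x \<le> 0"
proof -
  assume x: "x \<ge> 0"
  show ?thesis
  proof (cases "x = 0")
    case True
    have "deriv \<phi> 0 = 0" using even_deriv0[of \<phi> "deriv \<phi> 0"] even Dphi by blast
    then show ?thesis using True by simp
  next
    case False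
    then show ?thesis using sa_deriv_nonpos[OF mono_phi Dphi] x by simp
  qed
qed

lemma dphi0: "deriv \<phi> 0 = 0" using even_deriv0[of \<phi> "deriv \<phi> 0"] even Dphi by blast

lemma Dphi_chain: "DERIV \<phi> x :> dHf c \<sigma> (n x) * deriv n x"
proof -
  have "\<phi> = (\<lambda>x. Hf c \<sigma> (n x))" using phi_eq by (rule ext)
  moreover have "DERIV (\<lambda>x. Hf c \<sigma> (n x)) x :> dHf c \<sigma> (n x) * deriv n x"
    by (rule DERIV_chain2[OF Hf_deriv[OF n_pos] Dn])
  ultimately show ?thesis by simp
qed

lemma dphi_eq: "deriv \<phi> x = dHf c \<sigma> (n x) * deriv n x"
  using Dphi_chain DERIV_imp_deriv by blast

end

lemma fi_alg:
  fixes N N1 P1 P2 E C S e :: real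
  assumes "N \<noteq> 0" "e * P2 = E - N" "P1 = (C\<^sup>2 / N ^ 3 - S / N) * N1"
  shows "e * (P2 * P1 + P2 * P1) / 2 - E * P1 - C\<^sup>2 * (- (N1 * inverse (N ^ Suc (Suc 0)))) - S * N1 = 0"
proof -
  have "e * (P2 * P1 + P2 * P1) / 2 = (e * P2) * P1" by (simp add: algebra_simps)
  also have "\<dots> = (E - N) * P1" using assms(2) by simp
  finally have "e * (P2 * P1 + P2 * P1) / 2 = (E - N) * P1" .
  then have "e * (P2 * P1 + P2 * P1) / 2 - E * P1 = - N * P1" by (simp add: algebra_simps)
  also have "\<dots> = - (C\<^sup>2 / N\<^sup>2 - S) * N1" using assms(1,3)
    by (simp add: field_simps power2_eq_square power3_eq_cube)
  finally show ?thesis using assms(1) by (simp add: field_simps power2_eq_square)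
qed

context sw begin

lemma first_integral: "\<epsilon> * (deriv \<phi> x)\<^sup>2 / 2 = Qf c \<sigma> (n x)"
proof -
  define F where "F y = \<epsilon> * (deriv \<phi> y * deriv \<phi> y) / 2 - exp (\<phi> y) - c\<^sup>2 * inverse (n y) - \<sigma> * n y" for y
  have dF: "DERIV F y :> 0" for y
  proof -
    have a1: "DERIV (\<lambda>y. deriv \<phi> y * deriv \<phi> y) y :> deriv (deriv \<phi>) y * deriv \<phi> y + deriv (deriv \<phi>) y * deriv \<phi> y"
      by (rule DERIV_mult[OF DDphi DDphi])
    have a2: "DERIV (\<lambda>y. exp (\<phi> y)) y :> exp (\<phi> y) * deriv \<phi> y"
      by (rule DERIV_chain2[OF DERIV_exp Dphi])
    have a3: "DERIV (\<lambda>y. inverse (n y)) y :> - (deriv n y * inverse (n y ^ Suc (Suc 0)))"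
      by (rule DERIV_inverse_fun[OF Dn]) (use n_pos in \<open>simp add: less_imp_neq[symmetric]\<close>)
    have "DERIV F y :> \<epsilon> * (deriv (deriv \<phi>) y * deriv \<phi> y + deriv (deriv \<phi>) y * deriv \<phi> y) / 2
        - exp (\<phi> y) * deriv \<phi> y - c\<^sup>2 * (- (deriv n y * inverse (n y ^ Suc (Suc 0)))) - \<sigma> * deriv n y"
      unfolding F_def[abs_def]
      by (intro DERIV_diff DERIV_cdivide DERIV_cmult a1 a2 a3 Dn)
    moreover have "\<epsilon> * (deriv (deriv \<phi>) y * deriv \<phi> y + deriv (deriv \<phi>) y * deriv \<phi> y) / 2
        - exp (\<phi> y) * deriv \<phi> y - c\<^sup>2 * (- (deriv n y * inverse (n y ^ Suc (Suc 0)))) - \<sigma> * deriv n y = 0"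
      by (rule fi_alg) (use n_pos[of y] eq3[of y] dphi_eq[of y] in \<open>auto simp: dHf_def\<close>)
    ultimately show ?thesis by simp
  qed
  have Fc: "F y = F 0" for y using dF DERIV_isconst_all by blast
  define L where "L = 2 / \<epsilon> * (F 0 + 1 + c\<^sup>2 * inverse 1 + \<sigma> * 1)"
  have sq: "(deriv \<phi> y)\<^sup>2 = 2 / \<epsilon> * (F 0 + exp (\<phi> y) + c\<^sup>2 * inverse (n y) + \<sigma> * n y)" for y
    using Fc[of y] eps unfolding F_def by (simp add: field_simps power2_eq_square)
  have lim: "((\<lambda>y. (deriv \<phi> y)\<^sup>2) \<longlongrightarrow> L) at_top"
  proof -
    have "((\<lambda>y. 2 / \<epsilon> * (F 0 + exp (\<phi> y) + c\<^sup>2 * inverse (n y) + \<sigma> * n y)) \<longlongrightarrow>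
       2 / \<epsilon> * (F 0 + exp 0 + c\<^sup>2 * inverse 1 + \<sigma> * 1)) at_top"
      by (intro tendsto_intros lim_n lim_phi) simp
    then show ?thesis unfolding sq L_def by simp
  qed
  have L0: "L = 0"
  proof (rule ccontr)
    assume "L \<noteq> 0"
    moreover have "L \<ge> 0"
      by (rule tendsto_lowerbound[OF lim]) (auto intro: always_eventually)
    ultimately have Lp: "L > 0" by simp
    define m where "m = sqrt (L / 2)"
    have m0: "m > 0" using Lp m_def by simp
    have "eventually (\<lambda>y. L / 2 < (deriv \<phi> y)\<^sup>2) at_top"
      using order_tendstoD(1)[OF lim, of "L / 2"] Lp by linarith
    moreover have "eventually (\<lambda>y. (0::real) < y) at_top" by (rule eventually_gt_at_top)
    ultimately have "eventually (\<lambda>y. L / 2 < (deriv \<phi> y)\<^sup>2 \<and> 0 < y) at_top"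
      by (rule eventually_conj)
    then obtain X where X: "\<And>y. y \<ge> X \<Longrightarrow> L / 2 < (deriv \<phi> y)\<^sup>2 \<and> 0 < y"
      unfolding eventually_at_top_linorder by blast
    have neg: "deriv \<phi> y \<le> - m" if "y \<ge> X" for y
    proof -
      have h: "L / 2 < (deriv \<phi> y)\<^sup>2" "0 < y" using X[OF that] by auto
      have np: "deriv \<phi> y \<le> 0" using dphi_nonpos h(2) by simp
      have "m\<^sup>2 = L / 2" unfolding m_def using Lp by simp
      then have "m\<^sup>2 < (deriv \<phi> y)\<^sup>2" using h by simp
      then have "m < \<bar>deriv \<phi> y\<bar>" using m0 by (metis abs_of_pos power2_less_imp_less abs_ge_zero real_sqrt_abs real_sqrt_less_iff)
      then show ?thesis using np by simp
    qed
    define Y where "Y = X + (\<phi> X + 1) / m"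
    have XY: "X < Y" unfolding Y_def using m0 phi_ge0[of X] by simp
    obtain z where z: "X < z" "z < Y" "\<phi> Y - \<phi> X = (Y - X) * deriv \<phi> z"
      using MVT2[OF XY, of \<phi> "deriv \<phi>"] Dphi by blast
    have "(Y - X) * deriv \<phi> z \<le> (Y - X) * (- m)"
      using neg[of z] z XY by (intro mult_left_mono) auto
    also have "\<dots> = - (\<phi> X + 1)" unfolding Y_def using m0 by simp
    finally have "\<phi> Y \<le> - 1" using z by simp
    then show False using phi_ge0[of Y] by simp
  qed
  have F0: "F 0 = - (1 + c\<^sup>2 + \<sigma>)" using L0 eps unfolding L_def by simp
  have "\<epsilon> * (deriv \<phi> x)\<^sup>2 / 2 = F 0 + exp (\<phi> x) + c\<^sup>2 * inverse (n x) + \<sigma> * n x"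
    using sq[of x] eps by (simp add: field_simps)
  also have "\<dots> = Qf c \<sigma> (n x)"
    unfolding F0 Qf_def phi_eq[symmetric] by (simp add: algebra_simps divide_inverse)
  finally show ?thesis .
qed

end

lemma mvt_lin:
  fixes F F' :: "real \<Rightarrow> real"
  assumes s: "s \<ge> 0" and F0: "F 0 = 0"
    and d: "\<And>t. 0 \<le> t \<Longrightarrow> t \<le> s \<Longrightarrow> DERIV F t :> F' t"
    and b: "\<And>t. 0 \<le> t \<Longrightarrow> t \<le> s \<Longrightarrow> \<bar>F' t\<bar> \<le> K"
  shows "\<bar>F s\<bar> \<le> K * s"
proof (cases "s = 0")
  case True then show ?thesis using F0 by simp
next
  case False
  then have "0 < s" using s by simp
  then obtain z where z: "0 < z" "z < s" "F s - F 0 = (s - 0) * F' z"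
    using MVT2[of 0 s F F'] d by blast
  then have "\<bar>F s\<bar> = s * \<bar>F' z\<bar>" using F0 \<open>0 < s\<close> by (simp add: abs_mult)
  also have "\<dots> \<le> s * K" using b[of z] z \<open>0 < s\<close> by (intro mult_left_mono) auto
  finally show ?thesis by (simp add: mult.commute)
qed

lemma mvt_quad:
  fixes F F' :: "real \<Rightarrow> real"
  assumes s: "s \<ge> 0" and F0: "F 0 = 0"
    and d: "\<And>t. 0 \<le> t \<Longrightarrow> t \<le> s \<Longrightarrow> DERIV F t :> F' t"
    and b: "\<And>t. 0 \<le> t \<Longrightarrow> t \<le> s \<Longrightarrow> \<bar>F' t\<bar> \<le> K * t"
  shows "\<bar>F s\<bar> \<le> K * s\<^sup>2"
proof (cases "s = 0")
  case True then show ?thesis using F0 by simp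
next
  case False
  then have "0 < s" using s by simp
  then obtain z where z: "0 < z" "z < s" "F s - F 0 = (s - 0) * F' z"
    using MVT2[of 0 s F F'] d by blast
  have K0: "K \<ge> 0" using b[of z] z by (smt (verit) zero_le_mult_iff)
  have "\<bar>F s\<bar> = s * \<bar>F' z\<bar>" using F0 z \<open>0 < s\<close> by (simp add: abs_mult)
  also have "\<dots> \<le> s * (K * z)" using b[of z] z \<open>0 < s\<close> by (intro mult_left_mono) auto
  also have "\<dots> \<le> s * (K * s)" using K0 z \<open>0 < s\<close> by (intro mult_left_mono) auto
  finally show ?thesis by (simp add: power2_eq_square algebra_simps)
qed

lemma exp_quad: "\<bar>x\<bar> \<le> 1 \<Longrightarrow> \<bar>exp x - 1 - x\<bar> \<le> 2 * (x::real)\<^sup>2"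
proof -
  assume x: "\<bar>x\<bar> \<le> 1"
  obtain t where t: "\<bar>t\<bar> \<le> \<bar>x\<bar>" "exp x = (\<Sum>m<2. x ^ m / fact m) + exp t / fact 2 * x ^ 2"
    using Maclaurin_exp_le[of x 2] by blast
  have e: "exp x - 1 - x = exp t / 2 * x\<^sup>2" using t(2) by (simp add: numeral_2_eq_2)
  have "exp t \<le> exp 1" using t(1) x by simp
  also have "exp 1 \<le> (3::real)" using exp_le by simp
  finally have "exp t / 2 \<le> 2" by simp
  then have "exp t / 2 * x\<^sup>2 \<le> 2 * x\<^sup>2" by (intro mult_right_mono) auto
  moreover have "exp t / 2 * x\<^sup>2 \<ge> 0" by simp
  ultimately show ?thesis using e by (simp only: abs_of_nonneg)
qed

lemma div_le_self: "0 \<le> x \<Longrightarrow> 1 \<le> y \<Longrightarrow> x / y \<le> (x::real)"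
proof -
  assume x: "0 \<le> x" and y: "1 \<le> y"
  have "x * 1 \<le> x * y" using x y by (intro mult_left_mono)
  then show ?thesis using y by (simp add: divide_le_eq)
qed

lemma dh_alg0:
  fixes V g e s N :: real
  assumes N0: "N \<noteq> 0"
  shows "(V + g * e)\<^sup>2 / N ^ 3 - (V\<^sup>2 - 1) / N - 1 = ((V + g * e)\<^sup>2 - (V\<^sup>2 - 1) * N\<^sup>2 - N ^ 3) / N ^ 3"
  using N0 by (simp add: field_simps power2_eq_square power3_eq_cube)

lemma dh_alg:
  fixes V g e s :: real
  assumes N: "1 + e * s > 0"
  shows "(V + g * e)\<^sup>2 / (1 + e * s) ^ 3 - (V\<^sup>2 - 1) / (1 + e * s) - 1
     = e * (2 * V * g + g\<^sup>2 * e - V\<^sup>2 * s * (2 + e * s) - (1 + e * s)\<^sup>2 * s) / (1 + e * s) ^ 3"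
proof -
  have "(V + g * e)\<^sup>2 - (V\<^sup>2 - 1) * (1 + e * s)\<^sup>2 - (1 + e * s) ^ 3 = e * (2 * V * g + g\<^sup>2 * e - V\<^sup>2 * s * (2 + e * s) - (1 + e * s)\<^sup>2 * s)"
    by (simp add: power2_eq_square power3_eq_cube algebra_simps)
  then show ?thesis using dh_alg0[of "1 + e * s" V g e] N by simp
qed

locale par =
  fixes \<sigma> \<gamma> :: real
  assumes sig: "\<sigma> \<ge> 0" and gam: "\<gamma> > 0"
begin

definition V where "V = sqrt (1 + \<sigma>)"
lemma V2: "V\<^sup>2 = 1 + \<sigma>" unfolding V_def using sig by simp
lemma V1: "V \<ge> 1" unfolding V_def using sig by simp
lemma sigV: "\<sigma> = V\<^sup>2 - 1" using V2 by simp

definition S where "S = 6 * \<gamma> / V"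
lemma S_pos: "S > 0" unfolding S_def using V1 gam by simp

definition cc :: "real \<Rightarrow> real" where "cc e = V + \<gamma> * e"
definition dh where "dh e s = dHf (cc e) \<sigma> (1 + e * s)"
definition psf where "psf e s = Hf (cc e) \<sigma> (1 + e * s) / e"
definition gf where "gf e s = (exp (Hf (cc e) \<sigma> (1 + e * s)) - (1 + e * s)) / e\<^sup>2"
definition qf where "qf e s = Qf (cc e) \<sigma> (1 + e * s) / e ^ 3"
definition g0 where "g0 s = 2 * V * \<gamma> * s - V\<^sup>2 * s\<^sup>2"
definition q0 where "q0 s = V * \<gamma> * s\<^sup>2 - V\<^sup>2 * s ^ 3 / 3"
definition A1 where "A1 = 2 * V * \<gamma> + \<gamma>\<^sup>2 + V\<^sup>2 * S * (2 + S) + (1 + S)\<^sup>2 * S"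

lemma A1_pos: "A1 > 0" unfolding A1_def using V1 gam S_pos by (simp add: add_pos_nonneg)

definition Num where "Num e s = 2 * V * \<gamma> + \<gamma>\<^sup>2 * e - V\<^sup>2 * s * (2 + e * s) - (1 + e * s)\<^sup>2 * s"

lemma dh_eq: "e > 0 \<Longrightarrow> s \<ge> 0 \<Longrightarrow> dh e s - 1 = e * Num e s / (1 + e * s) ^ 3"
  unfolding dh_def dHf_def cc_def Num_def using dh_alg[of e s V \<gamma>] sigV
  by (simp add: add_pos_nonneg)

lemma Num_bound: "0 < e \<Longrightarrow> e \<le> 1 \<Longrightarrow> 0 \<le> s \<Longrightarrow> s \<le> S \<Longrightarrow> \<bar>Num e s\<bar> \<le> A1"
proof -
  assume e: "0 < e" "e \<le> 1" and s: "0 \<le> s" "s \<le> S"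
  have a: "0 \<le> 2 * V * \<gamma> + \<gamma>\<^sup>2 * e" "2 * V * \<gamma> + \<gamma>\<^sup>2 * e \<le> 2 * V * \<gamma> + \<gamma>\<^sup>2"
    using e V1 gam by (auto intro: mult_left_le)
  have es: "0 \<le> e * s" "e * s \<le> S" using e s by (auto intro: mult_le_one order_trans[OF mult_left_le_one_le])
  have b: "0 \<le> V\<^sup>2 * s * (2 + e * s)" "V\<^sup>2 * s * (2 + e * s) \<le> V\<^sup>2 * S * (2 + S)"
    using es s by (auto intro!: mult_mono)
  have d: "0 \<le> (1 + e * s)\<^sup>2 * s" "(1 + e * s)\<^sup>2 * s \<le> (1 + S)\<^sup>2 * S"
    using es s by (auto intro!: mult_mono power_mono)
  show ?thesis unfolding Num_def A1_def using a b d by linarith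
qed

lemma T1: "0 < e \<Longrightarrow> e \<le> 1 \<Longrightarrow> 0 \<le> s \<Longrightarrow> s \<le> S \<Longrightarrow> \<bar>dh e s - 1\<bar> \<le> A1 * e"
proof -
  assume e: "0 < e" "e \<le> 1" and s: "0 \<le> s" "s \<le> S"
  have N: "(1 + e * s) ^ 3 \<ge> 1" using e s by (simp add: one_le_power)
  have "\<bar>dh e s - 1\<bar> = e * \<bar>Num e s\<bar> / (1 + e * s) ^ 3"
    using dh_eq[of e s] e s N by (simp add: abs_mult abs_divide)
  also have "\<dots> \<le> e * \<bar>Num e s\<bar>" using N e by (intro div_le_self) auto
  also have "\<dots> \<le> e * A1" using Num_bound[OF e s] e by (simp add: mult_left_mono)
  finally show ?thesis by (simp add: mult.commute)
qed

end

lemma D_N: "DERIV (\<lambda>s. 1 + e * s) s :> (e::real)"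
  by (auto intro!: derivative_eq_intros)

lemma Hf1: "Hf c s 1 = 0" unfolding Hf_def by simp

context par begin

lemma Hcomp_deriv: "1 + e * s > 0 \<Longrightarrow> DERIV (\<lambda>s. Hf (cc e) \<sigma> (1 + e * s)) s :> dh e s * e"
  unfolding dh_def by (rule DERIV_chain2[OF Hf_deriv D_N])

lemma psf_deriv: "1 + e * s > 0 \<Longrightarrow> e \<noteq> 0 \<Longrightarrow> DERIV (psf e) s :> dh e s"
proof -
  assume N: "1 + e * s > 0" and e: "e \<noteq> 0"
  have "DERIV (\<lambda>s. Hf (cc e) \<sigma> (1 + e * s) / e) s :> dh e s * e / e"
    by (rule DERIV_cdivide[OF Hcomp_deriv[OF N]])
  then show ?thesis using e unfolding psf_def[abs_def] by simp
qed

lemma psf0: "psf e 0 = 0" unfolding psf_def by (simp add: Hf1)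

lemma T2: "0 < e \<Longrightarrow> e \<le> 1 \<Longrightarrow> 0 \<le> s \<Longrightarrow> s \<le> S \<Longrightarrow> \<bar>psf e s - s\<bar> \<le> A1 * e * s"
proof -
  assume e: "0 < e" "e \<le> 1" and s: "0 \<le> s" "s \<le> S"
  show ?thesis
  proof (rule mvt_lin[of s "\<lambda>s. psf e s - s" "\<lambda>t. dh e t - 1"])
    show "0 \<le> s" by fact
    show "psf e 0 - 0 = 0" by (simp add: psf0)
  next
    fix t assume t: "0 \<le> t" "t \<le> s"
    have "1 + e * t > 0" using e t by (simp add: add_pos_nonneg)
    then show "DERIV (\<lambda>s. psf e s - s) t :> dh e t - 1"
      using e by (intro DERIV_diff psf_deriv DERIV_ident) auto
    show "\<bar>dh e t - 1\<bar> \<le> A1 * e" using T1[of e t] e t s by simp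
  qed
qed

lemma gf_deriv: "1 + e * s > 0 \<Longrightarrow> e \<noteq> 0 \<Longrightarrow>
   DERIV (gf e) s :> (exp (Hf (cc e) \<sigma> (1 + e * s)) * dh e s - 1) / e"
proof -
  assume N: "1 + e * s > 0" and e: "e \<noteq> 0"
  have "DERIV (\<lambda>s. (exp (Hf (cc e) \<sigma> (1 + e * s)) - (1 + e * s)) / e\<^sup>2) s :>
      (exp (Hf (cc e) \<sigma> (1 + e * s)) * (dh e s * e) - e) / e\<^sup>2"
    by (intro DERIV_cdivide DERIV_diff DERIV_chain2[OF DERIV_exp Hcomp_deriv[OF N]] D_N)
  moreover have "(exp (Hf (cc e) \<sigma> (1 + e * s)) * (dh e s * e) - e) / e\<^sup>2
      = (exp (Hf (cc e) \<sigma> (1 + e * s)) * dh e s - 1) / e"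
    using e by (simp add: power2_eq_square field_simps)
  ultimately show ?thesis unfolding gf_def[abs_def] by simp
qed

lemma gf0: "gf e 0 = 0" unfolding gf_def by (simp add: Hf1)

end

context par begin

definition B where "B = (1 + A1) * S"
definition A5 where "A5 = (\<gamma>\<^sup>2 + V\<^sup>2 * S\<^sup>2 + (2 + S) * S\<^sup>2) + (2 * V * \<gamma> + 2 * V\<^sup>2 * S + S) * (3 * S * (1 + S)\<^sup>2)"
definition A3 where "A3 = (2 * B\<^sup>2 + A1 * S) * (1 + A1) + S * A1 + A5"

lemma B_pos: "B > 0" unfolding B_def using A1_pos S_pos by simp

lemma psf_bound: "0 < e \<Longrightarrow> e \<le> 1 \<Longrightarrow> 0 \<le> s \<Longrightarrow> s \<le> S \<Longrightarrow> \<bar>psf e s\<bar> \<le> B"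
proof -
  assume e: "0 < e" "e \<le> 1" and s: "0 \<le> s" "s \<le> S"
  have "A1 * e * s \<le> A1 * 1 * S" using A1_pos e s by (intro mult_mono) auto
  then show ?thesis using T2[OF e s] s unfolding B_def by (simp add: algebra_simps)
qed

lemma dh_bound: "0 < e \<Longrightarrow> e \<le> 1 \<Longrightarrow> 0 \<le> s \<Longrightarrow> s \<le> S \<Longrightarrow> \<bar>dh e s\<bar> \<le> 1 + A1"
proof -
  assume e: "0 < e" "e \<le> 1" and s: "0 \<le> s" "s \<le> S"
  have "A1 * e \<le> A1" using A1_pos e by (simp add: mult_left_le)
  then show ?thesis using T1[OF e s] by linarith
qed

lemma E1_bound:
  assumes e: "0 < e" "e \<le> 1" and eB: "e * B \<le> 1" and s: "0 \<le> s" "s \<le> S"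
  shows "\<bar>(exp (Hf (cc e) \<sigma> (1 + e * s)) - 1) / e - s\<bar> \<le> e * (2 * B\<^sup>2 + A1 * S)"
proof -
  define H where "H = Hf (cc e) \<sigma> (1 + e * s)"
  define p where "p = psf e s"
  have Hp: "H = e * p" unfolding H_def p_def psf_def using e by simp
  have pB: "\<bar>p\<bar> \<le> B" unfolding p_def using psf_bound[OF e s] .
  have "\<bar>H\<bar> \<le> e * B" unfolding Hp using pB e by (simp add: abs_mult)
  then have H1: "\<bar>H\<bar> \<le> 1" using eB by simp
  have q: "\<bar>exp H - 1 - H\<bar> \<le> 2 * H\<^sup>2" by (rule exp_quad[OF H1])
  have "\<bar>(exp H - 1) / e - p\<bar> = \<bar>exp H - 1 - H\<bar> / e"
    using e unfolding Hp by (simp add: field_simps abs_divide)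
  also have "\<dots> \<le> 2 * H\<^sup>2 / e" using q e by (simp add: divide_right_mono)
  also have "\<dots> = 2 * e * p\<^sup>2" unfolding Hp using e by (simp add: power2_eq_square)
  also have "\<dots> \<le> 2 * e * B\<^sup>2"
  proof -
    have "p\<^sup>2 \<le> B\<^sup>2" using pB by (metis abs_le_square_iff abs_of_pos B_pos)
    then show ?thesis using e by simp
  qed
  finally have a: "\<bar>(exp H - 1) / e - p\<bar> \<le> 2 * e * B\<^sup>2" .
  have b: "\<bar>p - s\<bar> \<le> A1 * e * s" unfolding p_def using T2[OF e s] .
  have "A1 * e * s \<le> A1 * e * S" using A1_pos e s by (intro mult_left_mono) auto
  then show ?thesis using a b unfolding H_def[symmetric] by (simp add: algebra_simps)
qed

lemma D1_bound:
  assumes e: "0 < e" "e \<le> 1" and s: "0 \<le> s" "s \<le> S"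
  shows "\<bar>(dh e s - 1) / e - (2 * V * \<gamma> - 2 * V\<^sup>2 * s - s)\<bar> \<le> A5 * e"
proof -
  define N where "N = 1 + e * s"
  define N0 where "N0 = 2 * V * \<gamma> - 2 * V\<^sup>2 * s - s"
  have es: "0 \<le> e * s" "e * s \<le> S" using e s by (auto intro: order_trans[OF mult_left_le_one_le])
  have N1: "1 \<le> N" "N \<le> 1 + S" unfolding N_def using es by auto
  have N3: "1 \<le> N ^ 3" using N1 by (simp add: one_le_power)
  have D1: "(dh e s - 1) / e = Num e s / N ^ 3" using dh_eq[of e s] e s unfolding N_def by simp
  have dnum: "Num e s - N0 = e * (\<gamma>\<^sup>2 - V\<^sup>2 * s\<^sup>2 - (2 + e * s) * s\<^sup>2)"
    unfolding Num_def N0_def by (simp add: power2_eq_square algebra_simps)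
  have dnb: "\<bar>\<gamma>\<^sup>2 - V\<^sup>2 * s\<^sup>2 - (2 + e * s) * s\<^sup>2\<bar> \<le> \<gamma>\<^sup>2 + V\<^sup>2 * S\<^sup>2 + (2 + S) * S\<^sup>2"
  proof -
    have "s\<^sup>2 \<le> S\<^sup>2" using s by (simp add: power_mono)
    then have "V\<^sup>2 * s\<^sup>2 \<le> V\<^sup>2 * S\<^sup>2" by (simp add: mult_left_mono)
    moreover have "(2 + e * s) * s\<^sup>2 \<le> (2 + S) * S\<^sup>2" using es \<open>s\<^sup>2 \<le> S\<^sup>2\<close> by (intro mult_mono) auto
    moreover have "0 \<le> (2 + e * s) * s\<^sup>2" using es by simp
    moreover have "0 \<le> V\<^sup>2 * s\<^sup>2" by simp
    moreover have "0 \<le> \<gamma>\<^sup>2" by simp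
    ultimately show ?thesis by (simp only: abs_le_iff) (intro conjI; linarith)
  qed
  have t1: "\<bar>(Num e s - N0) / N ^ 3\<bar> \<le> e * (\<gamma>\<^sup>2 + V\<^sup>2 * S\<^sup>2 + (2 + S) * S\<^sup>2)"
  proof -
    have "\<bar>(Num e s - N0) / N ^ 3\<bar> \<le> \<bar>Num e s - N0\<bar>"
      using N3 by (simp add: abs_divide div_le_self)
    also have "\<dots> \<le> e * (\<gamma>\<^sup>2 + V\<^sup>2 * S\<^sup>2 + (2 + S) * S\<^sup>2)"
      unfolding dnum using dnb e by (simp add: abs_mult mult_left_mono)
    finally show ?thesis .
  qed
  have n0b: "\<bar>N0\<bar> \<le> 2 * V * \<gamma> + 2 * V\<^sup>2 * S + S"
  proof -
    have "2 * V\<^sup>2 * s \<le> 2 * V\<^sup>2 * S" using s by (intro mult_left_mono) auto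
    moreover have "0 \<le> 2 * V\<^sup>2 * s" "0 \<le> 2 * V * \<gamma>" using s V1 gam by auto
    ultimately show ?thesis unfolding N0_def using s by (simp only: abs_le_iff) (intro conjI; linarith)
  qed
  have n3b: "0 \<le> (N ^ 3 - 1) / N ^ 3" "(N ^ 3 - 1) / N ^ 3 \<le> e * (3 * S * (1 + S)\<^sup>2)"
  proof -
    show "0 \<le> (N ^ 3 - 1) / N ^ 3" using N3 N1 by (intro divide_nonneg_nonneg) auto
    have "N ^ 3 - 1 = e * s * (N\<^sup>2 + N + 1)" unfolding N_def by (simp add: power2_eq_square power3_eq_cube algebra_simps)
    also have "\<dots> \<le> e * S * (3 * (1 + S)\<^sup>2)"
    proof (rule mult_mono)
      show "e * s \<le> e * S" using e s by simp
      have "N\<^sup>2 \<le> (1 + S)\<^sup>2" using N1 by (intro power_mono) auto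
      moreover have "1 \<le> (1 + S)\<^sup>2" using S_pos by (simp add: one_le_power)
      moreover have "N \<le> (1 + S)\<^sup>2" using N1 \<open>1 \<le> (1 + S)\<^sup>2\<close> S_pos
        by (smt (verit) power2_eq_square mult_le_cancel_left1)
      ultimately show "N\<^sup>2 + N + 1 \<le> 3 * (1 + S)\<^sup>2" by simp
      show "0 \<le> e * S" using e S_pos by simp
      show "0 \<le> N\<^sup>2 + N + 1" using N1 by simp
    qed
    finally have "N ^ 3 - 1 \<le> e * (3 * S * (1 + S)\<^sup>2)" by (simp add: algebra_simps)
    moreover have "(N ^ 3 - 1) / N ^ 3 \<le> N ^ 3 - 1" using N3 by (intro div_le_self) auto
    ultimately show "(N ^ 3 - 1) / N ^ 3 \<le> e * (3 * S * (1 + S)\<^sup>2)" by simp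
  qed
  have t2: "\<bar>N0 * ((N ^ 3 - 1) / N ^ 3)\<bar> \<le> (2 * V * \<gamma> + 2 * V\<^sup>2 * S + S) * (e * (3 * S * (1 + S)\<^sup>2))"
    unfolding abs_mult using n0b n3b by (intro mult_mono) auto
  have split: "Num e s / N ^ 3 - N0 = (Num e s - N0) / N ^ 3 - N0 * ((N ^ 3 - 1) / N ^ 3)"
  proof -
    have "N ^ 3 \<noteq> 0" using N3 by linarith
    then show ?thesis by (simp add: field_simps)
  qed
  have "\<bar>Num e s / N ^ 3 - N0\<bar> \<le> e * (\<gamma>\<^sup>2 + V\<^sup>2 * S\<^sup>2 + (2 + S) * S\<^sup>2) + (2 * V * \<gamma> + 2 * V\<^sup>2 * S + S) * (e * (3 * S * (1 + S)\<^sup>2))"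
    unfolding split using t1 t2 by linarith
  also have "\<dots> = A5 * e" unfolding A5_def by (simp add: algebra_simps)
  finally show ?thesis unfolding D1 N0_def[symmetric] .
qed

end

lemma Qf_alt: "Qf c s y = exp (Hf c s y) - 1 + c\<^sup>2 * (inverse y - 1) + s * (y - 1)"
  unfolding Qf_def by (simp add: inverse_eq_divide)

context par begin

definition A4 where "A4 = A1 * (2 * V * \<gamma> + V\<^sup>2 * S + A3) + A3"

lemma A3_pos: "A3 > 0"
proof -
  have "A5 \<ge> 0" unfolding A5_def using S_pos V1 gam by (intro add_nonneg_nonneg mult_nonneg_nonneg) auto
  moreover have "0 < (2 * B\<^sup>2 + A1 * S) * (1 + A1)" using A1_pos S_pos B_pos
    by (intro mult_pos_pos add_pos_pos) auto
  moreover have "0 \<le> S * A1" using A1_pos S_pos by simp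
  ultimately show ?thesis unfolding A3_def by linarith
qed

lemma g0_deriv: "DERIV g0 t :> 2 * V * \<gamma> - 2 * V\<^sup>2 * t"
  unfolding g0_def[abs_def] by (auto intro!: derivative_eq_intros simp: power2_eq_square)

lemma q0_deriv: "DERIV q0 t :> g0 t"
  unfolding q0_def[abs_def] g0_def by (auto intro!: derivative_eq_intros simp: power2_eq_square power3_eq_cube)

lemma T3:
  assumes e: "0 < e" "e \<le> 1" and eB: "e * B \<le> 1" and s: "0 \<le> s" "s \<le> S"
  shows "\<bar>gf e s - g0 s\<bar> \<le> A3 * e * s"
proof -
  have "\<bar>gf e s - g0 s\<bar> \<le> (A3 * e) * s"
  proof (rule mvt_lin[of s "\<lambda>s. gf e s - g0 s"
      "\<lambda>t. (exp (Hf (cc e) \<sigma> (1 + e * t)) * dh e t - 1) / e - (2 * V * \<gamma> - 2 * V\<^sup>2 * t)"])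
    show "0 \<le> s" by fact
    show "gf e 0 - g0 0 = 0" by (simp add: gf0 g0_def)
  next
    fix t assume t: "0 \<le> t" "t \<le> s"
    have "1 + e * t > 0" using e t by (simp add: add_pos_nonneg)
    then show "DERIV (\<lambda>s. gf e s - g0 s) t :> (exp (Hf (cc e) \<sigma> (1 + e * t)) * dh e t - 1) / e - (2 * V * \<gamma> - 2 * V\<^sup>2 * t)"
      using e by (intro DERIV_diff gf_deriv g0_deriv) auto
    have tS: "0 \<le> t" "t \<le> S" using t s by auto
    define E1 where "E1 = (exp (Hf (cc e) \<sigma> (1 + e * t)) - 1) / e"
    have eq: "(exp (Hf (cc e) \<sigma> (1 + e * t)) * dh e t - 1) / e - (2 * V * \<gamma> - 2 * V\<^sup>2 * t)
       = ((E1 - t) * dh e t + t * (dh e t - 1)) + ((dh e t - 1) / e - (2 * V * \<gamma> - 2 * V\<^sup>2 * t - t))"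
      unfolding E1_def using e by (simp add: field_simps)
    have b1: "\<bar>E1 - t\<bar> \<le> e * (2 * B\<^sup>2 + A1 * S)" unfolding E1_def by (rule E1_bound[OF e eB tS])
    have b2: "\<bar>dh e t\<bar> \<le> 1 + A1" by (rule dh_bound[OF e tS])
    have b3: "\<bar>dh e t - 1\<bar> \<le> A1 * e" by (rule T1[OF e tS])
    have b4: "\<bar>(dh e t - 1) / e - (2 * V * \<gamma> - 2 * V\<^sup>2 * t - t)\<bar> \<le> A5 * e" by (rule D1_bound[OF e tS])
    have c1: "\<bar>(E1 - t) * dh e t\<bar> \<le> e * (2 * B\<^sup>2 + A1 * S) * (1 + A1)"
      unfolding abs_mult using b1 b2 by (intro mult_mono) auto
    have c2: "\<bar>t * (dh e t - 1)\<bar> \<le> S * (A1 * e)"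
      unfolding abs_mult using b3 tS by (intro mult_mono) auto
    have "\<bar>(exp (Hf (cc e) \<sigma> (1 + e * t)) * dh e t - 1) / e - (2 * V * \<gamma> - 2 * V\<^sup>2 * t)\<bar>
       \<le> e * (2 * B\<^sup>2 + A1 * S) * (1 + A1) + S * (A1 * e) + A5 * e"
      unfolding eq using c1 c2 b4 by linarith
    also have "\<dots> = A3 * e" unfolding A3_def by (simp add: algebra_simps)
    finally show "\<bar>(exp (Hf (cc e) \<sigma> (1 + e * t)) * dh e t - 1) / e - (2 * V * \<gamma> - 2 * V\<^sup>2 * t)\<bar> \<le> A3 * e" .
  qed
  then show ?thesis by (simp add: mult.assoc)
qed

lemma qf_deriv:
  assumes N: "1 + e * s > 0" and e: "e \<noteq> 0"
  shows "DERIV (qf e) s :> dh e s * gf e s"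
proof -
  define H where "H = Hf (cc e) \<sigma> (1 + e * s)"
  define N where "N = 1 + e * s"
  have a1: "DERIV (\<lambda>s. exp (Hf (cc e) \<sigma> (1 + e * s))) s :> exp H * (dh e s * e)"
    unfolding H_def by (rule DERIV_chain2[OF DERIV_exp Hcomp_deriv[OF N]])
  have a2: "DERIV (\<lambda>s. inverse (1 + e * s)) s :> - (e * inverse ((1 + e * s) ^ Suc (Suc 0)))"
    by (rule DERIV_inverse_fun[OF D_N]) (use N in simp)
  have "DERIV (\<lambda>s. (exp (Hf (cc e) \<sigma> (1 + e * s)) - 1 + (cc e)\<^sup>2 * (inverse (1 + e * s) - 1) + \<sigma> * ((1 + e * s) - 1)) / e ^ 3) s :>
     (exp H * (dh e s * e) - 0 + (cc e)\<^sup>2 * (- (e * inverse ((1 + e * s) ^ Suc (Suc 0))) - 0) + \<sigma> * (e - 0)) / e ^ 3"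
    by (intro DERIV_cdivide DERIV_add DERIV_diff DERIV_cmult a1 a2 D_N DERIV_const)
  moreover have "(exp H * (dh e s * e) - 0 + (cc e)\<^sup>2 * (- (e * inverse ((1 + e * s) ^ Suc (Suc 0))) - 0) + \<sigma> * (e - 0)) / e ^ 3
      = dh e s * gf e s"
  proof -
    have N0: "N \<noteq> 0" using N N_def by simp
    have "dh e s = (cc e)\<^sup>2 / N ^ 3 - \<sigma> / N" unfolding dh_def dHf_def N_def ..
    moreover have "gf e s = (exp H - N) / e\<^sup>2" unfolding gf_def H_def N_def ..
    ultimately show ?thesis unfolding N_def[symmetric] using N0 e
      by (simp only:) (simp add: field_simps power2_eq_square power3_eq_cube)
  qed
  ultimately show ?thesis unfolding qf_def[abs_def] Qf_alt by simp
qed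

lemma qf0: "qf e 0 = 0" unfolding qf_def Qf_def by (simp add: Hf1)

lemma T4:
  assumes e: "0 < e" "e \<le> 1" and eB: "e * B \<le> 1" and s: "0 \<le> s" "s \<le> S"
  shows "\<bar>qf e s - q0 s\<bar> \<le> A4 * e * s\<^sup>2"
proof -
  have "\<bar>qf e s - q0 s\<bar> \<le> (A4 * e) * s\<^sup>2"
  proof (rule mvt_quad[of s "\<lambda>s. qf e s - q0 s" "\<lambda>t. dh e t * gf e t - g0 t"])
    show "0 \<le> s" by fact
    show "qf e 0 - q0 0 = 0" by (simp add: qf0 q0_def)
  next
    fix t assume t: "0 \<le> t" "t \<le> s"
    have "1 + e * t > 0" using e t by (simp add: add_pos_nonneg)
    then show "DERIV (\<lambda>s. qf e s - q0 s) t :> dh e t * gf e t - g0 t"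
      using e by (intro DERIV_diff qf_deriv q0_deriv) auto
    have tS: "0 \<le> t" "t \<le> S" using t s by auto
    have b3: "\<bar>dh e t - 1\<bar> \<le> A1 * e" by (rule T1[OF e tS])
    have g3: "\<bar>gf e t - g0 t\<bar> \<le> A3 * e * t" by (rule T3[OF e eB tS])
    have g0b: "\<bar>g0 t\<bar> \<le> (2 * V * \<gamma> + V\<^sup>2 * S) * t"
    proof -
      have "g0 t = t * (2 * V * \<gamma> - V\<^sup>2 * t)" unfolding g0_def by (simp add: power2_eq_square algebra_simps)
      moreover have "\<bar>2 * V * \<gamma> - V\<^sup>2 * t\<bar> \<le> 2 * V * \<gamma> + V\<^sup>2 * S"
      proof -
        have "V\<^sup>2 * t \<le> V\<^sup>2 * S" using tS by (intro mult_left_mono) auto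
        moreover have "0 \<le> V\<^sup>2 * t" "0 \<le> 2 * V * \<gamma>" using tS V1 gam by auto
        ultimately show ?thesis by (simp only: abs_le_iff) (intro conjI; linarith)
      qed
      ultimately show ?thesis using tS by (simp add: abs_mult mult.commute mult_left_mono)
    qed
    have gb: "\<bar>gf e t\<bar> \<le> (2 * V * \<gamma> + V\<^sup>2 * S + A3) * t"
    proof -
      have "e * t \<le> t" using e tS by (simp add: mult_left_le_one_le)
      then have "A3 * e * t \<le> A3 * t" using A3_pos by (simp add: mult.assoc mult_left_mono)
      then show ?thesis using g3 g0b by (simp add: algebra_simps)
    qed
    have "\<bar>dh e t * gf e t - g0 t\<bar> = \<bar>(dh e t - 1) * gf e t + (gf e t - g0 t)\<bar>"
      by (simp add: algebra_simps)
    also have "\<dots> \<le> \<bar>dh e t - 1\<bar> * \<bar>gf e t\<bar> + \<bar>gf e t - g0 t\<bar>"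
      by (metis abs_mult abs_triangle_ineq)
    also have "\<dots> \<le> (A1 * e) * ((2 * V * \<gamma> + V\<^sup>2 * S + A3) * t) + A3 * e * t"
      using b3 gb g3 by (intro add_mono mult_mono) auto
    also have "\<dots> = (A4 * e) * t" unfolding A4_def by (simp add: algebra_simps)
    finally show "\<bar>dh e t * gf e t - g0 t\<bar> \<le> (A4 * e) * t" .
  qed
  then show ?thesis by (simp add: mult.assoc)
qed

end

sublocale sw \<subseteq> par \<sigma> \<gamma> using sig gam by unfold_locales

context sw begin

lemma c_cc: "c = cc \<epsilon>" unfolding cc_def V_def ..

definition w where "w x = (n x - 1) / \<epsilon>"
definition psi where "psi x = \<phi> x / \<epsilon>"

lemma n_w: "n x = 1 + \<epsilon> * w x" unfolding w_def using eps by simp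
lemma w_nonneg: "w x \<ge> 0" unfolding w_def using n_ge1 eps by simp

lemma psi_eq: "psi x = psf \<epsilon> (w x)"
  unfolding psi_def psf_def phi_eq n_w[symmetric] c_cc ..

lemma Dpsi: "DERIV psi x :> deriv \<phi> x / \<epsilon>"
  unfolding psi_def[abs_def] by (rule DERIV_cdivide[OF Dphi])
lemma deriv_psi: "deriv psi x = deriv \<phi> x / \<epsilon>" using Dpsi DERIV_imp_deriv by blast
lemma deriv_psi_fun: "deriv psi = (\<lambda>x. deriv \<phi> x / \<epsilon>)" using deriv_psi by (rule ext)
lemma DDpsi: "DERIV (deriv psi) x :> deriv (deriv \<phi>) x / \<epsilon>"
  unfolding deriv_psi_fun by (rule DERIV_cdivide[OF DDphi])

lemma dpsi_sq: "(deriv psi x)\<^sup>2 = 2 * qf \<epsilon> (w x)"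
proof -
  have "(deriv psi x)\<^sup>2 = (deriv \<phi> x)\<^sup>2 / \<epsilon>\<^sup>2" unfolding deriv_psi by (simp add: power_divide)
  also have "\<dots> = 2 * (\<epsilon> * (deriv \<phi> x)\<^sup>2 / 2) / \<epsilon> ^ 3" using eps by (simp add: power2_eq_square power3_eq_cube)
  also have "\<dots> = 2 * qf \<epsilon> (w x)" unfolding first_integral qf_def n_w[symmetric] c_cc by simp
  finally show ?thesis .
qed

lemma ddpsi: "deriv (deriv psi) x = gf \<epsilon> (w x)"
proof -
  have "deriv (deriv psi) x = deriv (deriv \<phi>) x / \<epsilon>" using DDpsi DERIV_imp_deriv by blast
  also have "\<dots> = (exp (\<phi> x) - n x) / \<epsilon>\<^sup>2" using eq3[of x] eps by (simp add: field_simps power2_eq_square)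
  also have "\<dots> = gf \<epsilon> (w x)" unfolding gf_def n_w[symmetric] c_cc[symmetric] phi_eq ..
  finally show ?thesis .
qed

lemma dpsi_nonpos: "x \<ge> 0 \<Longrightarrow> deriv psi x \<le> 0"
  unfolding deriv_psi using dphi_nonpos eps by (simp add: divide_nonpos_pos)

lemma dpsi0: "deriv psi 0 = 0" unfolding deriv_psi dphi0 by simp

lemma cont_w: "isCont w x" unfolding w_def[abs_def] using cont_n eps by (intro continuous_intros) auto

lemma lim_w: "(w \<longlongrightarrow> 0) at_top"
proof -
  have "((\<lambda>x. (n x - 1) / \<epsilon>) \<longlongrightarrow> (1 - 1) / \<epsilon>) at_top" using eps by (intro tendsto_intros lim_n) auto
  then show ?thesis unfolding w_def[abs_def] by simp
qed

lemma w_even: "w (- x) = w x" unfolding w_def using even by simp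

lemma q0_S: "q0 S = - V * \<gamma> * S\<^sup>2"
proof -
  have "V\<^sup>2 * S / 3 = 2 * V * \<gamma>" unfolding S_def using V1 by (simp add: power2_eq_square field_simps)
  moreover have "V\<^sup>2 * S ^ 3 / 3 = (V\<^sup>2 * S / 3) * S\<^sup>2" by (simp add: power2_eq_square power3_eq_cube)
  ultimately have "V\<^sup>2 * S ^ 3 / 3 = 2 * V * \<gamma> * S\<^sup>2" by simp
  then show ?thesis unfolding q0_def by simp
qed

lemma amplitude:
  assumes e1: "\<epsilon> \<le> 1" and eB: "\<epsilon> * B \<le> 1" and eA4: "A4 * \<epsilon> < V * \<gamma>"
  shows "w x \<le> S"
proof (rule ccontr)
  assume "\<not> w x \<le> S"
  then have big: "w x > S" by simp
  define x0 where "x0 = \<bar>x\<bar>"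
  have "w x0 = w x"
  proof (cases "x \<ge> 0")
    case True then show ?thesis unfolding x0_def by simp
  next
    case False then show ?thesis unfolding x0_def using w_even[of x] by simp
  qed
  then have x0: "x0 \<ge> 0" "w x0 > S" unfolding x0_def using big by auto
  have "eventually (\<lambda>y. w y < S) at_top" using order_tendstoD(2)[OF lim_w] S_pos by simp
  then obtain X where X: "\<And>y. y \<ge> X \<Longrightarrow> w y < S" unfolding eventually_at_top_linorder by blast
  define Y where "Y = max X x0"
  have "w Y < S" using X Y_def by simp
  moreover have "x0 \<le> Y" unfolding Y_def by simp
  ultimately obtain z where z: "x0 \<le> z" "z \<le> Y" "w z = S"
    using IVT2'[of w Y S x0] x0 cont_w continuous_at_imp_continuous_on by (smt (verit))
  have "qf \<epsilon> S \<le> q0 S + A4 * \<epsilon> * S\<^sup>2" using T4[OF eps e1 eB, of S] S_pos by simp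
  also have "\<dots> < 0"
  proof -
    have "A4 * \<epsilon> * S\<^sup>2 < V * \<gamma> * S\<^sup>2" using eA4 S_pos by simp
    then show ?thesis unfolding q0_S by simp
  qed
  finally have "qf \<epsilon> S < 0" .
  moreover have "(deriv psi z)\<^sup>2 = 2 * qf \<epsilon> S" using dpsi_sq[of z] z by simp
  ultimately show False by (smt (verit) zero_le_power2)
qed

end

lemma ly_core:
  fixes a s t tau m r Q :: real
  assumes a: "a > 0" and s: "s \<ge> 0" and t: "t \<ge> 0" and tau: "0 \<le> tau" "tau \<le> 3 * a / 100"
    and m: "0 \<le> m" "m \<le> a\<^sup>2 / 20"
    and r: "r \<le> s * (a / 3 - t + tau)" and Q: "Q \<ge> s\<^sup>2 * (a\<^sup>2 - 2 * a * t - m)" and Q0: "Q \<ge> 0"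
  shows "r \<le> sqrt Q"
proof (cases "r \<le> 0")
  case True then show ?thesis using Q0 by (meson order_trans real_sqrt_ge_zero)
next
  case False
  define rho where "rho = a / 3 - t + tau"
  have rs: "0 < s * rho" using False r rho_def by simp
  then have sp: "s > 0" and rp: "rho > 0" using s by (auto simp: zero_less_mult_iff)
  have rho_le: "rho \<le> 109 * a / 300" unfolding rho_def using t tau by simp
  have t_le: "t < 109 * a / 300" using rp tau unfolding rho_def by simp
  have r1: "rho\<^sup>2 \<le> (109 * a / 300)\<^sup>2" using rp rho_le by (intro power_mono) auto
  have "2 * a * t \<le> 2 * a * (109 * a / 300)" using t_le a by (intro mult_left_mono) auto
  then have "a\<^sup>2 - 2 * a * t - m \<ge> a\<^sup>2 - 2 * a * (109 * a / 300) - a\<^sup>2 / 20" using m by simp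
  moreover have "a\<^sup>2 - 2 * a * (109 * a / 300) - a\<^sup>2 / 20 \<ge> (109 * a / 300)\<^sup>2"
    by (simp add: power2_eq_square field_simps)
  ultimately have "rho\<^sup>2 \<le> a\<^sup>2 - 2 * a * t - m" using r1 by simp
  then have "s\<^sup>2 * rho\<^sup>2 \<le> s\<^sup>2 * (a\<^sup>2 - 2 * a * t - m)" by (intro mult_left_mono) auto
  then have "(s * rho)\<^sup>2 \<le> Q" using Q by (simp add: power_mult_distrib)
  then have "s * rho \<le> sqrt Q" by (rule real_le_rsqrt)
  then show ?thesis using r rho_def by simp
qed

lemma lam_core:
  fixes a s P Q :: real
  assumes a: "a > 0" and s: "s \<ge> 0" and P: "P \<ge> 9 / 10 * s" and Q0: "0 \<le> Q" and Q: "Q \<le> s\<^sup>2 * (a\<^sup>2 + a\<^sup>2 / 20)"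
  shows "P - 1 / (3 * a) * sqrt Q \<ge> s / 2" and "sqrt Q \<le> 11 / 10 * a * s"
proof -
  have "Q \<le> (11 / 10 * a * s)\<^sup>2"
  proof -
    have e1: "s\<^sup>2 * (a\<^sup>2 + a\<^sup>2 / 20) = 21 / 20 * (a * s)\<^sup>2" by (simp add: power2_eq_square algebra_simps)
    have e2: "(11 / 10 * a * s)\<^sup>2 = 121 / 100 * (a * s)\<^sup>2" by (simp add: power2_eq_square algebra_simps)
    have "21 / 20 * (a * s)\<^sup>2 \<le> 121 / 100 * (a * s)\<^sup>2" by (intro mult_right_mono) auto
    then show ?thesis using Q unfolding e1 e2 by linarith
  qed
  then show sq: "sqrt Q \<le> 11 / 10 * a * s" using a s by (intro real_le_lsqrt) auto
  have "1 / (3 * a) * sqrt Q \<le> 1 / (3 * a) * (11 / 10 * a * s)" using sq a by (intro mult_left_mono) auto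
  also have "\<dots> = 11 / 30 * s" using a by simp
  finally show "P - 1 / (3 * a) * sqrt Q \<ge> s / 2" using P s by simp
qed

context par begin

definition aa where "aa = sqrt (2 * V * \<gamma>)"
definition bet where "bet = 1 / (3 * aa)"
definition kap where "kap = aa / 100"

lemma aa_pos: "aa > 0" unfolding aa_def using V1 gam by simp
lemma aa2: "aa\<^sup>2 = 2 * V * \<gamma>" unfolding aa_def using V1 gam by simp
lemma kap_pos: "kap > 0" unfolding kap_def using aa_pos by simp
lemma bet_pos: "bet > 0" unfolding bet_def using aa_pos by simp

lemma A4_pos: "A4 > 0"
  unfolding A4_def using A1_pos A3_pos S_pos V1 gam by (intro add_nonneg_pos mult_nonneg_nonneg) auto

definition good where "good e \<longleftrightarrow> 0 < e \<and> e \<le> 1 \<and> e * B \<le> 1 \<and> A1 * e \<le> 1 / 10 \<and>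
   A4 * e \<le> aa\<^sup>2 / 40 \<and> A3 * e \<le> 3 * aa\<^sup>2 / 100"

lemma good_exists: "\<exists>e1>0. \<forall>e. 0 < e \<and> e < e1 \<longrightarrow> good e"
proof -
  define e1 where "e1 = min 1 (min (1 / B) (min (1 / (10 * A1)) (min (aa\<^sup>2 / (40 * A4)) (3 * aa\<^sup>2 / (100 * A3)))))"
  have p: "e1 > 0" unfolding e1_def using B_pos A1_pos A4_pos A3_pos aa_pos by simp
  have "good e" if e: "0 < e" "e < e1" for e
  proof -
    have "e \<le> 1" "e \<le> 1 / B" "e \<le> 1 / (10 * A1)" "e \<le> aa\<^sup>2 / (40 * A4)" "e \<le> 3 * aa\<^sup>2 / (100 * A3)"
      using e unfolding e1_def by auto
    then show ?thesis unfolding good_def using e B_pos A1_pos A4_pos A3_pos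
      by (auto simp: field_simps)
  qed
  then show ?thesis using p by blast
qed

lemma good_simps: "good e \<Longrightarrow> 0 < e" "good e \<Longrightarrow> e \<le> 1" "good e \<Longrightarrow> e * B \<le> 1"
  "good e \<Longrightarrow> A1 * e \<le> 1 / 10" "good e \<Longrightarrow> A4 * e \<le> aa\<^sup>2 / 40" "good e \<Longrightarrow> A3 * e \<le> 3 * aa\<^sup>2 / 100"
  unfolding good_def by auto

lemma good_amp: "good e \<Longrightarrow> A4 * e < V * \<gamma>"
proof -
  assume g: "good e"
  have "V * \<gamma> > 0" using V1 gam by simp
  moreover have "A4 * e \<le> aa\<^sup>2 / 40" by (rule good_simps(5)[OF g])
  ultimately show ?thesis unfolding aa2 by (simp add: mult.commute)
qed

lemma qf_lower: "good e \<Longrightarrow> 0 \<le> s \<Longrightarrow> s \<le> S \<Longrightarrow> 2 * qf e s \<ge> s\<^sup>2 * (aa\<^sup>2 - 2 * aa * (bet * V\<^sup>2 * s) - 2 * A4 * e)"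
proof -
  assume g: "good e" and s: "0 \<le> s" "s \<le> S"
  have "\<bar>qf e s - q0 s\<bar> \<le> A4 * e * s\<^sup>2" using T4 good_simps[OF g] s by simp
  then have "qf e s \<ge> q0 s - A4 * e * s\<^sup>2" by simp
  moreover have "2 * q0 s = s\<^sup>2 * (aa\<^sup>2 - 2 * aa * (bet * V\<^sup>2 * s))"
  proof -
    have "2 * aa * (bet * V\<^sup>2 * s) = 2 / 3 * V\<^sup>2 * s" unfolding bet_def using aa_pos by (simp add: field_simps)
    then have "s\<^sup>2 * (aa\<^sup>2 - 2 * aa * (bet * V\<^sup>2 * s)) = s\<^sup>2 * (2 * V * \<gamma> - 2 / 3 * V\<^sup>2 * s)" by (simp add: aa2)
    moreover have "2 * q0 s = s\<^sup>2 * (2 * V * \<gamma> - 2 / 3 * V\<^sup>2 * s)"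
      unfolding q0_def by (simp add: power2_eq_square power3_eq_cube algebra_simps)
    ultimately show ?thesis by linarith
  qed
  ultimately show ?thesis by (simp add: algebra_simps)
qed

lemma qf_upper: "good e \<Longrightarrow> 0 \<le> s \<Longrightarrow> s \<le> S \<Longrightarrow> 2 * qf e s \<le> s\<^sup>2 * (aa\<^sup>2 + aa\<^sup>2 / 20)"
proof -
  assume g: "good e" and s: "0 \<le> s" "s \<le> S"
  have "\<bar>qf e s - q0 s\<bar> \<le> A4 * e * s\<^sup>2" using T4 good_simps[OF g] s by simp
  then have "qf e s \<le> q0 s + A4 * e * s\<^sup>2" by simp
  moreover have "q0 s \<le> V * \<gamma> * s\<^sup>2" unfolding q0_def using s by simp
  moreover have "A4 * e * s\<^sup>2 \<le> aa\<^sup>2 / 40 * s\<^sup>2" using good_simps(5)[OF g] by (intro mult_right_mono) auto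
  ultimately show ?thesis unfolding aa2 by (simp add: algebra_simps)
qed

lemma psf_lower: "good e \<Longrightarrow> 0 \<le> s \<Longrightarrow> s \<le> S \<Longrightarrow> psf e s \<ge> 9 / 10 * s \<and> psf e s \<le> 11 / 10 * s"
proof -
  assume g: "good e" and s: "0 \<le> s" "s \<le> S"
  have "\<bar>psf e s - s\<bar> \<le> A1 * e * s" using T2 good_simps[OF g] s by simp
  moreover have "A1 * e * s \<le> 1 / 10 * s" using good_simps(4)[OF g] s by (intro mult_right_mono) auto
  ultimately show ?thesis by (simp add: abs_le_iff)
qed

lemma gf_bound: "good e \<Longrightarrow> 0 \<le> s \<Longrightarrow> s \<le> S \<Longrightarrow> \<bar>gf e s\<bar> \<le> (2 * V * \<gamma> + V\<^sup>2 * S + A3) * s"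
proof -
  assume g: "good e" and s: "0 \<le> s" "s \<le> S"
  have g3: "\<bar>gf e s - g0 s\<bar> \<le> A3 * e * s" using T3 good_simps[OF g] s by simp
  have g0b: "\<bar>g0 s\<bar> \<le> (2 * V * \<gamma> + V\<^sup>2 * S) * s"
  proof -
    have "g0 s = s * (2 * V * \<gamma> - V\<^sup>2 * s)" unfolding g0_def by (simp add: power2_eq_square algebra_simps)
    moreover have "\<bar>2 * V * \<gamma> - V\<^sup>2 * s\<bar> \<le> 2 * V * \<gamma> + V\<^sup>2 * S"
    proof -
      have "V\<^sup>2 * s \<le> V\<^sup>2 * S" using s by (intro mult_left_mono) auto
      moreover have "0 \<le> V\<^sup>2 * s" "0 \<le> 2 * V * \<gamma>" using s V1 gam by auto
      ultimately show ?thesis by (simp only: abs_le_iff) (intro conjI; linarith)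
    qed
    ultimately show ?thesis using s by (simp add: abs_mult mult.commute mult_left_mono)
  qed
  have "e * s \<le> s" using good_simps(1,2)[OF g] s by (simp add: mult_left_le_one_le)
  then have "A3 * e * s \<le> A3 * s" using A3_pos by (simp add: mult.assoc mult_left_mono)
  then show ?thesis using g3 g0b by (simp add: algebra_simps)
qed

lemma LY: "good e \<Longrightarrow> 0 \<le> s \<Longrightarrow> s \<le> S \<Longrightarrow> qf e s \<ge> 0 \<Longrightarrow>
   bet * gf e s + kap * psf e s \<le> sqrt (2 * qf e s)"
proof -
  assume g: "good e" and s: "0 \<le> s" "s \<le> S" and q: "qf e s \<ge> 0"
  define t where "t = bet * V\<^sup>2 * s"
  define tau where "tau = bet * A3 * e + kap * (11 / 10)"
  have e: "0 < e" "e \<le> 1" using good_simps[OF g] by auto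
  have t0: "t \<ge> 0" unfolding t_def using bet_pos s by simp
  have tau0: "0 \<le> tau" unfolding tau_def using bet_pos A3_pos kap_pos e by simp
  have tau1: "tau \<le> 3 * aa / 100"
  proof -
    have "bet * (A3 * e) \<le> bet * (3 * aa\<^sup>2 / 100)" using good_simps(6)[OF g] bet_pos by (intro mult_left_mono) auto
    also have "\<dots> = aa / 100" unfolding bet_def using aa_pos by (simp add: power2_eq_square)
    finally show ?thesis unfolding tau_def kap_def using aa_pos by (simp add: mult.assoc)
  qed
  have gfb: "gf e s \<le> g0 s + A3 * e * s" using T3[OF e good_simps(3)[OF g] s] by simp
  have psb: "psf e s \<le> 11 / 10 * s" using psf_lower[OF g s] by simp
  have "bet * gf e s \<le> bet * (g0 s + A3 * e * s)" using gfb bet_pos by (intro mult_left_mono) auto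
  also have "\<dots> = s * (aa / 3 - t) + s * (bet * A3 * e)"
    unfolding g0_def t_def bet_def aa2[symmetric] using aa_pos by (simp add: power2_eq_square field_simps)
  finally have r1: "bet * gf e s \<le> s * (aa / 3 - t) + s * (bet * A3 * e)" .
  have r2: "kap * psf e s \<le> s * (kap * (11 / 10))" using psb kap_pos by (simp add: mult_left_mono mult.commute mult.left_commute)
  have r: "bet * gf e s + kap * psf e s \<le> s * (aa / 3 - t + tau)"
    using r1 r2 unfolding tau_def by (simp add: algebra_simps)
  have Q: "2 * qf e s \<ge> s\<^sup>2 * (aa\<^sup>2 - 2 * aa * t - 2 * A4 * e)" unfolding t_def by (rule qf_lower[OF g s])
  show ?thesis
  proof (rule ly_core[OF aa_pos s(1) t0 tau0 tau1 _ _ r Q])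
    show "0 \<le> 2 * A4 * e" using A4_pos e by simp
    show "2 * A4 * e \<le> aa\<^sup>2 / 20" using good_simps(5)[OF g] by simp
    show "0 \<le> 2 * qf e s" using q by simp
  qed
qed

lemma Lam_lower: "good e \<Longrightarrow> 0 \<le> s \<Longrightarrow> s \<le> S \<Longrightarrow> qf e s \<ge> 0 \<Longrightarrow>
   psf e s - bet * sqrt (2 * qf e s) \<ge> s / 2 \<and> sqrt (2 * qf e s) \<le> 11 / 10 * aa * s"
  using lam_core[OF aa_pos, of s "psf e s" "2 * qf e s"] psf_lower qf_upper unfolding bet_def by auto

end

context sw begin

definition Lam where "Lam x = psi x + bet * deriv psi x"

lemma sm_psi: "smooth_fun psi"
proof -
  have "psi = (\<lambda>x. (1 / \<epsilon>) * \<phi> x)" unfolding psi_def[abs_def] by simp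
  then show ?thesis using smooth_cmult[OF sm_phi, of "1 / \<epsilon>"] by simp
qed

context
  assumes g: "good \<epsilon>"
begin

lemma w_le_S: "w x \<le> S" using amplitude good_simps[OF g] good_amp[OF g] by simp

lemma qf_nonneg: "qf \<epsilon> (w x) \<ge> 0"
proof -
  have "0 \<le> (deriv psi x)\<^sup>2" by simp
  then show ?thesis unfolding dpsi_sq by simp
qed

lemma dpsi_sqrt: "x \<ge> 0 \<Longrightarrow> deriv psi x = - sqrt (2 * qf \<epsilon> (w x))"
proof -
  assume x: "x \<ge> 0"
  have "sqrt (2 * qf \<epsilon> (w x)) = \<bar>deriv psi x\<bar>" unfolding dpsi_sq[symmetric] by simp
  then show ?thesis using dpsi_nonpos[OF x] by simp
qed

lemma Lam_deriv: "DERIV Lam x :> deriv psi x + bet * gf \<epsilon> (w x)"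
proof -
  have "DERIV psi x :> deriv psi x" using Dpsi deriv_psi by simp
  moreover have "DERIV (deriv psi) x :> gf \<epsilon> (w x)"
  proof -
    have "deriv (deriv psi) x = deriv (deriv \<phi>) x / \<epsilon>" by (rule DERIV_imp_deriv[OF DDpsi])
    then have "deriv (deriv \<phi>) x / \<epsilon> = gf \<epsilon> (w x)" using ddpsi by simp
    then show ?thesis using DDpsi[of x] by simp
  qed
  ultimately show ?thesis unfolding Lam_def[abs_def] by (intro DERIV_add DERIV_cmult)
qed

lemma Lam_ineq: "x > 0 \<Longrightarrow> deriv psi x + bet * gf \<epsilon> (w x) + kap * Lam x \<le> 0"
proof -
  assume x: "x > 0"
  define q where "q = sqrt (2 * qf \<epsilon> (w x))"
  have q0: "q \<ge> 0" unfolding q_def using qf_nonneg by simp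
  have d: "deriv psi x = - q" unfolding q_def using dpsi_sqrt x by simp
  have ly: "bet * gf \<epsilon> (w x) + kap * psf \<epsilon> (w x) \<le> q"
    unfolding q_def by (rule LY[OF g w_nonneg w_le_S qf_nonneg])
  have "deriv psi x + bet * gf \<epsilon> (w x) + kap * Lam x
     = - q * (1 + kap * bet) + (bet * gf \<epsilon> (w x) + kap * psf \<epsilon> (w x))"
    unfolding Lam_def d psi_eq by (simp add: algebra_simps)
  also have "\<dots> \<le> - q * (1 + kap * bet) + q" using ly by simp
  also have "\<dots> \<le> 0" using q0 kap_pos bet_pos by (simp add: algebra_simps)
  finally show ?thesis .
qed

lemma Lam_decay: "x \<ge> 0 \<Longrightarrow> Lam x \<le> Lam 0 * exp (- kap * x)"
proof -
  assume x: "x \<ge> 0"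
  define M where "M y = Lam y * exp (kap * y)" for y
  have dM: "DERIV M y :> (deriv psi y + bet * gf \<epsilon> (w y) + kap * Lam y) * exp (kap * y)" for y
  proof -
    have a: "DERIV (\<lambda>y. exp (kap * y)) y :> exp (kap * y) * (kap * 1)"
      by (rule DERIV_chain2[OF DERIV_exp DERIV_cmult[OF DERIV_ident]])
    have "DERIV M y :> (deriv psi y + bet * gf \<epsilon> (w y)) * exp (kap * y) + (exp (kap * y) * (kap * 1)) * Lam y"
      unfolding M_def[abs_def] by (rule DERIV_mult[OF Lam_deriv a])
    moreover have "(deriv psi y + bet * gf \<epsilon> (w y)) * exp (kap * y) + (exp (kap * y) * (kap * 1)) * Lam y
       = (deriv psi y + bet * gf \<epsilon> (w y) + kap * Lam y) * exp (kap * y)" by (simp add: algebra_simps)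
    ultimately show ?thesis by simp
  qed
  have "M x \<le> M 0"
  proof (cases "x = 0")
    case False
    then have "0 < x" using x by simp
    then obtain z where z: "0 < z" "z < x" "M x - M 0 = (x - 0) * ((deriv psi z + bet * gf \<epsilon> (w z) + kap * Lam z) * exp (kap * z))"
      using MVT2[of 0 x M "\<lambda>y. (deriv psi y + bet * gf \<epsilon> (w y) + kap * Lam y) * exp (kap * y)"] dM by blast
    have "(deriv psi z + bet * gf \<epsilon> (w z) + kap * Lam z) * exp (kap * z) \<le> 0"
      using Lam_ineq[OF z(1)] by (simp add: mult_nonpos_nonneg)
    then have "(x - 0) * ((deriv psi z + bet * gf \<epsilon> (w z) + kap * Lam z) * exp (kap * z)) \<le> 0"
      using x by (simp add: mult_nonneg_nonpos)
    then show ?thesis using z by simp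
  qed simp
  then have "Lam x * exp (kap * x) \<le> Lam 0" unfolding M_def by simp
  then have "Lam x * exp (kap * x) * exp (- kap * x) \<le> Lam 0 * exp (- kap * x)"
    by (intro mult_right_mono) auto
  then show ?thesis by (simp add: mult.assoc flip: exp_add)
qed

lemma Lam_lower_sol: "x \<ge> 0 \<Longrightarrow> Lam x \<ge> w x / 2"
proof -
  assume x: "x \<ge> 0"
  have "Lam x = psf \<epsilon> (w x) - bet * sqrt (2 * qf \<epsilon> (w x))"
    unfolding Lam_def psi_eq dpsi_sqrt[OF x] by simp
  then show ?thesis using Lam_lower[OF g w_nonneg w_le_S qf_nonneg] by simp
qed

lemma Lam0: "Lam 0 \<le> 11 / 10 * S"
proof -
  have "Lam 0 = psf \<epsilon> (w 0)" unfolding Lam_def dpsi0 psi_eq by simp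
  also have "\<dots> \<le> 11 / 10 * w 0" using psf_lower[OF g w_nonneg w_le_S] by simp
  also have "\<dots> \<le> 11 / 10 * S" using w_le_S by simp
  finally show ?thesis .
qed

lemma w_decay: "x \<ge> 0 \<Longrightarrow> w x \<le> 11 / 5 * S * exp (- kap * x)"
proof -
  assume x: "x \<ge> 0"
  have "w x / 2 \<le> Lam 0 * exp (- kap * x)" using Lam_lower_sol[OF x] Lam_decay[OF x] by simp
  also have "\<dots> \<le> 11 / 10 * S * exp (- kap * x)" using Lam0 by (intro mult_right_mono) auto
  finally show ?thesis by simp
qed

end
end

lemma smooth_divc: "smooth_fun f \<Longrightarrow> smooth_fun (\<lambda>x. f x / a)"
proof -
  assume "smooth_fun f"
  then have "smooth_fun (\<lambda>x. (1 / a) * f x)" by (rule smooth_cmult)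
  then show ?thesis by simp
qed

lemma smooth_diff: "smooth_fun f \<Longrightarrow> smooth_fun g \<Longrightarrow> smooth_fun (\<lambda>x. f x - g x)"
proof -
  assume "smooth_fun f" "smooth_fun g"
  then have "smooth_fun (\<lambda>x. f x + (- 1) * g x)" by (intro smooth_add smooth_cmult)
  then show ?thesis by simp
qed

lemma K_alg:
  fixes V g e N s :: real
  assumes N: "N > 0" and e: "e \<noteq> 0" and s: "s = V\<^sup>2 - 1"
  shows "(V + g * e)\<^sup>2 / N ^ 3 - s / N - 1 = e * ((2 * V * g + g\<^sup>2 * e)
     - (V + g * e)\<^sup>2 * ((N - 1) / e * inverse N * (inverse N * inverse N + inverse N + 1))
     + s * ((N - 1) / e * inverse N))"
  using N e unfolding s by (simp add: field_simps power2_eq_square power3_eq_cube)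

context sw begin

definition v where "v x = inverse (n x)"
definition Pv where "Pv x = (cc \<epsilon>)\<^sup>2 * (v x * v x * v x) - \<sigma> * v x"
definition Zf where "Zf x = inverse (Pv x)"
definition Ef where "Ef x = (exp (\<phi> x) - 1) / \<epsilon>"
definition Kf where "Kf x = (2 * V * \<gamma> + \<gamma>\<^sup>2 * \<epsilon>) - (cc \<epsilon>)\<^sup>2 * (w x * v x * (v x * v x + v x + 1)) + \<sigma> * (w x * v x)"

lemma Pv_dHf: "Pv x = dHf (cc \<epsilon>) \<sigma> (n x)"
proof -
  have "inverse (n x ^ 3) = inverse (n x) * inverse (n x) * inverse (n x)"
    by (simp add: power3_eq_cube)
  then show ?thesis unfolding Pv_def v_def dHf_def divide_inverse by simp
qed

lemma Pv_dh: "Pv x = dh \<epsilon> (w x)"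
proof -
  have "Pv x = dHf (cc \<epsilon>) \<sigma> (n x)" by (rule Pv_dHf)
  also have "n x = 1 + \<epsilon> * w x" by (rule n_w)
  finally show ?thesis unfolding dh_def .
qed

lemma sm_w: "smooth_fun w"
proof -
  have "w = (\<lambda>x. (n x - 1) / \<epsilon>)" unfolding w_def[abs_def] ..
  then show ?thesis using smooth_divc[OF smooth_diff[OF sm_n smooth_const]] by simp
qed

lemma sm_v: "smooth_fun v"
proof -
  have "v = (\<lambda>x. inverse (n x))" unfolding v_def[abs_def] ..
  then show ?thesis using smooth_inverse[OF sm_n] n_pos by (simp add: less_imp_neq[symmetric])
qed

lemma sm_Ef: "smooth_fun Ef"
proof -
  have "Ef = (\<lambda>x. (exp (\<phi> x) - 1) / \<epsilon>)" unfolding Ef_def[abs_def] ..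
  then show ?thesis using smooth_divc[OF smooth_diff[OF smooth_exp[OF sm_phi] smooth_const]] by simp
qed

lemma sm_Pv: "smooth_fun Pv"
proof -
  have "Pv = (\<lambda>x. (cc \<epsilon>)\<^sup>2 * (v x * v x * v x) - \<sigma> * v x)" unfolding Pv_def[abs_def] ..
  moreover have "smooth_fun (\<lambda>x. (cc \<epsilon>)\<^sup>2 * (v x * v x * v x) - \<sigma> * v x)"
    by (rule smooth_diff[OF smooth_cmult[OF smooth_mult[OF smooth_mult[OF sm_v sm_v] sm_v]] smooth_cmult[OF sm_v]])
  ultimately show ?thesis by simp
qed

lemma Kf_alt: "dHf (cc \<epsilon>) \<sigma> (n x) - 1 = \<epsilon> * Kf x"
proof -
  have "dHf (cc \<epsilon>) \<sigma> (n x) - 1 = (V + \<gamma> * \<epsilon>)\<^sup>2 / n x ^ 3 - \<sigma> / n x - 1" unfolding dHf_def cc_def ..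
  also have "\<dots> = \<epsilon> * Kf x" unfolding Kf_def w_def v_def cc_def
    by (rule K_alg[OF n_pos]) (use eps sigV in auto)
  finally show ?thesis .
qed

lemma Dn_w: "deriv w x = deriv n x / \<epsilon>"
proof -
  have "DERIV w x :> (deriv n x - 0) / \<epsilon>" unfolding w_def[abs_def]
    by (rule DERIV_cdivide[OF DERIV_diff[OF Dn DERIV_const]])
  then show ?thesis using DERIV_imp_deriv by simp
qed

context
  assumes g: "good \<epsilon>"
begin

lemma dh_w_bounds: "dh \<epsilon> (w x) \<ge> 9 / 10"
proof -
  have h: "\<bar>dh \<epsilon> (w x) - 1\<bar> \<le> A1 * \<epsilon>"
    by (rule T1[OF good_simps(1,2)[OF g] w_nonneg w_le_S[OF g]])
  have "A1 * \<epsilon> \<le> 1 / 10" by (rule good_simps(4)[OF g])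
  then show ?thesis using h by (simp add: abs_le_iff)
qed

lemma Pv_pos: "Pv x \<ge> 9 / 10" unfolding Pv_dh using dh_w_bounds .

lemma Pv_nz: "Pv x \<noteq> 0" using Pv_pos[of x] by linarith

lemma sm_Zf: "smooth_fun Zf"
proof -
  have "Zf = (\<lambda>x. inverse (Pv x))" unfolding Zf_def[abs_def] ..
  then show ?thesis using smooth_inverse[OF sm_Pv Pv_nz] by simp
qed

lemma R1: "deriv w = (\<lambda>x. deriv psi x * Zf x)"
proof
  fix x
  have nz: "Pv x \<noteq> 0" by (rule Pv_nz)
  have "deriv psi x * Zf x = (Pv x * deriv n x / \<epsilon>) * inverse (Pv x)"
    unfolding deriv_psi dphi_eq Zf_def Pv_dHf c_cc ..
  also have "\<dots> = deriv n x / \<epsilon>" using nz by (simp add: field_simps)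
  finally show "deriv w x = deriv psi x * Zf x" unfolding Dn_w by simp
qed

end
end

lemma exp_lin: "\<bar>y\<bar> \<le> 1 \<Longrightarrow> \<bar>exp y - 1\<bar> \<le> 3 * \<bar>y::real\<bar>"
proof -
  assume y: "\<bar>y\<bar> \<le> 1"
  have "\<bar>exp y - 1 - y\<bar> \<le> 2 * y\<^sup>2" by (rule exp_quad[OF y])
  moreover have "y\<^sup>2 \<le> \<bar>y\<bar>" using y by (metis abs_ge_zero abs_mult_self_eq mult_left_le_one_le power2_eq_square)
  ultimately show ?thesis by (simp add: abs_le_iff) linarith
qed

context sw begin

lemma ddpsi_fun: "deriv (deriv psi) = (\<lambda>x. (exp (\<phi> x) - n x) / \<epsilon>\<^sup>2)"
proof
  fix x
  have "deriv (deriv psi) x = deriv (deriv \<phi>) x / \<epsilon>" by (rule DERIV_imp_deriv[OF DDpsi])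
  also have "\<dots> = (exp (\<phi> x) - n x) / \<epsilon>\<^sup>2" using eq3[of x] eps by (simp add: field_simps power2_eq_square)
  finally show "deriv (deriv psi) x = (exp (\<phi> x) - n x) / \<epsilon>\<^sup>2" .
qed

lemma R3: "(deriv ^^ 3) psi = (\<lambda>x. Ef x * deriv psi x + deriv w x * Kf x)"
proof
  fix x
  have "(deriv ^^ 3) psi = deriv (deriv (deriv psi))" by (simp add: numeral_3_eq_3)
  then have e1: "(deriv ^^ 3) psi x = deriv (\<lambda>x. (exp (\<phi> x) - n x) / \<epsilon>\<^sup>2) x" unfolding ddpsi_fun by simp
  have "DERIV (\<lambda>x. (exp (\<phi> x) - n x) / \<epsilon>\<^sup>2) x :> (exp (\<phi> x) * deriv \<phi> x - deriv n x) / \<epsilon>\<^sup>2"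
    by (rule DERIV_cdivide[OF DERIV_diff[OF DERIV_chain2[OF DERIV_exp Dphi] Dn]])
  then have e2: "(deriv ^^ 3) psi x = (exp (\<phi> x) * deriv \<phi> x - deriv n x) / \<epsilon>\<^sup>2"
    unfolding e1 by (rule DERIV_imp_deriv)
  have ex: "exp (\<phi> x) = 1 + \<epsilon> * Ef x" unfolding Ef_def using eps by simp
  have dp: "deriv \<phi> x = (1 + \<epsilon> * Kf x) * deriv n x" unfolding dphi_eq c_cc using Kf_alt[of x] by simp
  show "(deriv ^^ 3) psi x = Ef x * deriv psi x + deriv w x * Kf x"
    unfolding e2 deriv_psi Dn_w ex dp using eps by (simp add: field_simps power2_eq_square)
qed

lemma R4: "deriv Ef = (\<lambda>x. (1 + \<epsilon> * Ef x) * deriv psi x)"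
proof
  fix x
  have "DERIV Ef x :> (exp (\<phi> x) * deriv \<phi> x - 0) / \<epsilon>"
    unfolding Ef_def[abs_def] by (rule DERIV_cdivide[OF DERIV_diff[OF DERIV_chain2[OF DERIV_exp Dphi] DERIV_const]])
  then have "deriv Ef x = exp (\<phi> x) * deriv \<phi> x / \<epsilon>" using DERIV_imp_deriv by simp
  moreover have "exp (\<phi> x) = 1 + \<epsilon> * Ef x" unfolding Ef_def using eps by simp
  ultimately show "deriv Ef x = (1 + \<epsilon> * Ef x) * deriv psi x" unfolding deriv_psi by simp
qed

lemma Dv: "DERIV v x :> (- \<epsilon>) * (deriv w x * (v x * v x))"
proof -
  have "DERIV v x :> - (deriv n x * inverse (n x ^ Suc (Suc 0)))"
    unfolding v_def[abs_def] by (rule DERIV_inverse_fun[OF Dn]) (use n_pos[of x] in simp)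
  moreover have "- (deriv n x * inverse (n x ^ Suc (Suc 0))) = (- \<epsilon>) * (deriv w x * (v x * v x))"
    unfolding Dn_w v_def using eps by (simp add: field_simps power2_eq_square)
  ultimately show ?thesis by simp
qed

lemma R5: "deriv v = (\<lambda>x. (- \<epsilon>) * (deriv w x * (v x * v x)))"
  using Dv DERIV_imp_deriv by (intro ext) blast

context
  assumes g: "good \<epsilon>"
begin

lemma R6: "deriv Zf = (\<lambda>x. \<epsilon> * ((3 * (cc \<epsilon>)\<^sup>2 * (v x * v x) - \<sigma>) * (deriv w x * (v x * v x * (Zf x * Zf x)))))"
proof
  fix x
  define d where "d = (- \<epsilon>) * (deriv w x * (v x * v x))"
  have dv: "DERIV v x :> d" unfolding d_def by (rule Dv)
  have "DERIV Pv x :> (cc \<epsilon>)\<^sup>2 * ((d * v x + d * v x) * v x + d * (v x * v x)) - \<sigma> * d"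
    unfolding Pv_def[abs_def]
    by (intro DERIV_diff DERIV_cmult DERIV_mult dv)
  then have "DERIV Zf x :> - (((cc \<epsilon>)\<^sup>2 * ((d * v x + d * v x) * v x + d * (v x * v x)) - \<sigma> * d) * inverse (Pv x ^ Suc (Suc 0)))"
    unfolding Zf_def[abs_def] by (rule DERIV_inverse_fun) (rule Pv_nz[OF g])
  moreover have "- (((cc \<epsilon>)\<^sup>2 * ((d * v x + d * v x) * v x + d * (v x * v x)) - \<sigma> * d) * inverse (Pv x ^ Suc (Suc 0)))
     = \<epsilon> * ((3 * (cc \<epsilon>)\<^sup>2 * (v x * v x) - \<sigma>) * (deriv w x * (v x * v x * (Zf x * Zf x))))"
    unfolding d_def Zf_def using Pv_nz[OF g, of x] by (simp add: field_simps power2_eq_square)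
  ultimately show "deriv Zf x = \<epsilon> * ((3 * (cc \<epsilon>)\<^sup>2 * (v x * v x) - \<sigma>) * (deriv w x * (v x * v x * (Zf x * Zf x))))"
    using DERIV_imp_deriv by simp
qed

end
end

context par begin
definition Wd where "Wd = 11 / 5 * S"
definition Gc where "Gc = 2 * V * \<gamma> + V\<^sup>2 * S + A3"
end

context sw begin

lemma u_eps: "u x / \<epsilon> = cc \<epsilon> * (w x * v x)"
proof -
  have nz: "n x \<noteq> 0" using n_pos[of x] by simp
  show ?thesis unfolding u_eq c_cc w_def v_def using nz eps by (simp add: field_simps)
qed

context
  assumes g: "good \<epsilon>"
begin

lemma b_w: "x \<ge> 0 \<Longrightarrow> \<bar>w x\<bar> \<le> Wd * exp (- kap * x)"
  using w_decay[OF g] w_nonneg unfolding Wd_def by simp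

lemma psi_w: "\<bar>psi x\<bar> \<le> 11 / 10 * w x"
proof -
  have h: "psf \<epsilon> (w x) \<ge> 9 / 10 * w x \<and> psf \<epsilon> (w x) \<le> 11 / 10 * w x"
    by (rule psf_lower[OF g w_nonneg w_le_S[OF g]])
  have "0 \<le> w x" by (rule w_nonneg)
  then have "psf \<epsilon> (w x) \<ge> 0" using h by linarith
  then show ?thesis unfolding psi_eq using h by simp
qed

lemma b_psi: "x \<ge> 0 \<Longrightarrow> \<bar>psi x\<bar> \<le> (11 / 10 * Wd) * exp (- kap * x)"
  using psi_w[of x] b_w[of x] w_nonneg[of x] by simp

lemma b_dpsi: "x \<ge> 0 \<Longrightarrow> \<bar>deriv psi x\<bar> \<le> (11 / 10 * aa * Wd) * exp (- kap * x)"
proof -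
  assume x: "x \<ge> 0"
  have "\<bar>deriv psi x\<bar> = sqrt (2 * qf \<epsilon> (w x))" unfolding dpsi_sqrt[OF g x] using qf_nonneg[OF g] by simp
  also have "\<dots> \<le> 11 / 10 * aa * w x" using Lam_lower[OF g w_nonneg w_le_S[OF g] qf_nonneg[OF g]] by simp
  also have "\<dots> \<le> 11 / 10 * aa * (Wd * exp (- kap * x))"
    using b_w[OF x] w_nonneg[of x] aa_pos by (intro mult_left_mono) auto
  finally show ?thesis by simp
qed

lemma b_ddpsi: "x \<ge> 0 \<Longrightarrow> \<bar>deriv (deriv psi) x\<bar> \<le> (Gc * Wd) * exp (- kap * x)"
proof -
  assume x: "x \<ge> 0"
  have G0: "Gc \<ge> 0" unfolding Gc_def using V1 gam A3_pos S_pos by simp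
  have "\<bar>deriv (deriv psi) x\<bar> = \<bar>gf \<epsilon> (w x)\<bar>" unfolding ddpsi ..
  also have "\<dots> \<le> Gc * w x" unfolding Gc_def using gf_bound[OF g w_nonneg w_le_S[OF g]] .
  also have "\<dots> \<le> Gc * (Wd * exp (- kap * x))"
    using b_w[OF x] w_nonneg[of x] G0 by (intro mult_left_mono) auto
  finally show ?thesis by simp
qed

lemma b_Ef: "x \<ge> 0 \<Longrightarrow> \<bar>Ef x\<bar> \<le> (33 / 10 * Wd) * exp (- kap * x)"
proof -
  assume x: "x \<ge> 0"
  have ph: "\<phi> x = \<epsilon> * psi x" unfolding psi_def using eps by simp
  have "\<bar>\<epsilon> * psi x\<bar> \<le> 1"
  proof -
    have "\<bar>psi x\<bar> \<le> B" unfolding psi_eq using psf_bound good_simps[OF g] w_nonneg w_le_S[OF g] by simp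
    then have "\<bar>\<epsilon> * psi x\<bar> \<le> \<epsilon> * B" using eps by (simp add: abs_mult mult_left_mono)
    then show ?thesis using good_simps(3)[OF g] by simp
  qed
  then have "\<bar>exp (\<phi> x) - 1\<bar> \<le> 3 * \<bar>\<epsilon> * psi x\<bar>" unfolding ph by (rule exp_lin)
  then have "\<bar>Ef x\<bar> \<le> 3 * \<bar>psi x\<bar>" unfolding Ef_def using eps by (simp add: abs_mult abs_divide field_simps)
  then show ?thesis using b_psi[OF x] by simp
qed

lemma b_v: "\<bar>v x\<bar> \<le> 1"
proof -
  have "1 \<le> n x" by (rule n_ge1)
  then have "inverse (n x) \<le> inverse 1" by (intro le_imp_inverse_le) auto
  moreover have "inverse (n x) > 0" using n_pos[of x] by simp
  ultimately show ?thesis unfolding v_def by simp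
qed

lemma b_Z: "\<bar>Zf x\<bar> \<le> 10 / 9"
proof -
  have "Pv x \<ge> 9 / 10" by (rule Pv_pos[OF g])
  then have "inverse (Pv x) \<le> inverse (9 / 10)" by (intro le_imp_inverse_le) auto
  moreover have "inverse (Pv x) > 0" using \<open>Pv x \<ge> 9 / 10\<close> by simp
  ultimately show ?thesis unfolding Zf_def by simp
qed

end
end

definition bdu :: "'p set \<Rightarrow> ('p \<Rightarrow> real \<Rightarrow> real) \<Rightarrow> real \<Rightarrow> nat \<Rightarrow> bool" where
  "bdu P f a m \<longleftrightarrow> (\<forall>j\<le>m. bd P f a j)"

lemma bdu_bd: "bdu P f a m \<Longrightarrow> j \<le> m \<Longrightarrow> bd P f a j" unfolding bdu_def by blast

lemma bdu_add: "sm P f \<Longrightarrow> sm P g \<Longrightarrow> bdu P f a m \<Longrightarrow> bdu P g a m \<Longrightarrow> bdu P (\<lambda>p x. f p x + g p x) a m"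
  unfolding bdu_def using bd_add by blast

lemma bdu_mult: "sm P f \<Longrightarrow> sm P g \<Longrightarrow> bdu P f a m \<Longrightarrow> bdu P g b m \<Longrightarrow> c \<le> a + b \<Longrightarrow>
   bdu P (\<lambda>p x. f p x * g p x) c m"
proof -
  assume sf: "sm P f" and sg: "sm P g" and bf: "bdu P f a m" and bg: "bdu P g b m" and c: "c \<le> a + b"
  show ?thesis unfolding bdu_def
  proof (intro allI impI)
    fix j assume j: "j \<le> m"
    have "bd P (\<lambda>p x. f p x * g p x) (a + b) j"
      by (rule bd_mult[OF sf sg]) (use bf bg j in \<open>auto simp: bdu_def\<close>)
    then show "bd P (\<lambda>p x. f p x * g p x) c j" by (rule bd_mono[OF c])
  qed
qed

lemma bdu_cmult: "sm P f \<Longrightarrow> bdu P f a m \<Longrightarrow> (\<And>p. p \<in> P \<Longrightarrow> \<bar>s p\<bar> \<le> M) \<Longrightarrow> bdu P (\<lambda>p x. s p * f p x) a m"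
  unfolding bdu_def using bd_cmult by blast

lemma bdu_const: "(\<And>p. p \<in> P \<Longrightarrow> \<bar>s p\<bar> \<le> M) \<Longrightarrow> bdu P (\<lambda>p x. s p) 0 m"
  unfolding bdu_def using bd_const by blast

lemma bdu_mono: "b \<le> a \<Longrightarrow> bdu P f a m \<Longrightarrow> bdu P f b m"
  unfolding bdu_def using bd_mono by blast

lemma bdu_deriv: "bdu P f a (Suc m) \<Longrightarrow> bdu P (\<lambda>p. deriv (f p)) a m"
  unfolding bdu_def bd_deriv by auto

lemma bdu_cong: "(\<And>p x. p \<in> P \<Longrightarrow> f p x = g p x) \<Longrightarrow> bdu P f a m = bdu P g a m"
  unfolding bdu_def using bd_cong by blast

lemma bd_shift: "bd P (\<lambda>p. (deriv ^^ j) (f p)) a m \<Longrightarrow> bd P f a (m + j)"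
  unfolding bd_def by (simp add: funpow_add)

lemma bdu_lessI: "(\<And>j. j < k \<Longrightarrow> bd P f a j) \<Longrightarrow> m < k \<Longrightarrow> bdu P f a m"
  unfolding bdu_def by auto

context sw begin
lemma X_W: "w = (\<lambda>x. (n x - 1) / \<epsilon>)" unfolding w_def[abs_def] ..
lemma X_P: "psi = (\<lambda>x. \<phi> x / \<epsilon>)" unfolding psi_def[abs_def] ..
lemma X_E: "Ef = (\<lambda>x. (exp (\<phi> x) - 1) / \<epsilon>)" unfolding Ef_def[abs_def] ..
lemma X_v: "v = (\<lambda>x. inverse (n x))" unfolding v_def[abs_def] ..
lemma X_Z: "Zf = (\<lambda>x. inverse ((cc \<epsilon>)\<^sup>2 * (inverse (n x) * inverse (n x) * inverse (n x)) - \<sigma> * inverse (n x)))"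
  unfolding Zf_def[abs_def] Pv_def v_def ..
lemma X_K: "Kf x = (2 * V * \<gamma> + \<gamma>\<^sup>2 * \<epsilon>) + (- (cc \<epsilon>)\<^sup>2) * (w x * (v x * (v x * v x + v x + 1))) + \<sigma> * (w x * v x)"
  unfolding Kf_def by (simp add: algebra_simps)
end

context par begin

definition PS :: "(real \<times> (real \<Rightarrow> real) \<times> (real \<Rightarrow> real) \<times> (real \<Rightarrow> real)) set" where
  "PS = {p. case p of (e, n, u, \<phi>) \<Rightarrow> good e \<and> solitary_wave \<sigma> \<gamma> e n u \<phi>}"

definition fW where "fW p = (case p of (e, n, u, \<phi>) \<Rightarrow> (\<lambda>x. (n x - 1) / e))"
definition fP where "fP p = (case p of (e, n, u, \<phi>) \<Rightarrow> (\<lambda>x. \<phi> x / e))"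
definition fE where "fE p = (case p of (e, n, u, \<phi>) \<Rightarrow> (\<lambda>x. (exp (\<phi> x) - 1) / e))"
definition fv where "fv p = (case p of (e, n, u, \<phi>) \<Rightarrow> (\<lambda>x. inverse (n x)))"
definition fZ where "fZ p = (case p of (e, n, u, \<phi>) \<Rightarrow>
   (\<lambda>x. inverse ((cc e)\<^sup>2 * (inverse (n x) * inverse (n x) * inverse (n x)) - \<sigma> * inverse (n x))))"
definition fK where "fK p x = (2 * V * \<gamma> + \<gamma>\<^sup>2 * fst p) + (- (cc (fst p))\<^sup>2) * (fW p x * (fv p x * (fv p x * fv p x + fv p x + 1))) + \<sigma> * (fW p x * fv p x)"

lemma PS_D: "p \<in> PS \<Longrightarrow> \<exists>e n u \<phi>. p = (e, n, u, \<phi>) \<and> good e \<and> sw \<sigma> \<gamma> e n u \<phi>"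
proof -
  assume "p \<in> PS"
  then obtain e n u \<phi> where p: "p = (e, n, u, \<phi>)" and g: "good e" and s: "solitary_wave \<sigma> \<gamma> e n u \<phi>"
  proof -
    obtain e n u \<phi> where p: "p = (e, n, u, \<phi>)" by (cases p) blast
    then show ?thesis using \<open>p \<in> PS\<close> that unfolding PS_def by simp
  qed
  have "sw \<sigma> \<gamma> e n u \<phi>" using sig gam good_simps(1)[OF g] s by unfold_locales
  then show ?thesis using p g by blast
qed

lemma PS_e: "p \<in> PS \<Longrightarrow> 0 < fst p \<and> fst p \<le> 1"
proof -
  assume "p \<in> PS"
  then obtain e n u \<phi> where "p = (e, n, u, \<phi>)" "good e" using PS_D by blast
  then show ?thesis using good_simps(1,2) by simp
qed

lemma fam_facts:
  assumes p: "p \<in> PS"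
  shows "smooth_fun (fW p)" "smooth_fun (fP p)" "smooth_fun (fE p)" "smooth_fun (fv p)" "smooth_fun (fZ p)"
    "deriv (fW p) x = deriv (fP p) x * fZ p x"
    "(deriv ^^ 3) (fP p) x = fE p x * deriv (fP p) x + deriv (fW p) x * fK p x"
    "deriv (fE p) x = (1 + fst p * fE p x) * deriv (fP p) x"
    "deriv (fv p) x = (- fst p) * (deriv (fW p) x * (fv p x * fv p x))"
    "deriv (fZ p) x = fst p * ((3 * (cc (fst p))\<^sup>2 * (fv p x * fv p x) - \<sigma>) * (deriv (fW p) x * (fv p x * fv p x * (fZ p x * fZ p x))))"
proof -
  obtain e n u \<phi> where pe: "p = (e, n, u, \<phi>)" and g: "good e" and s: "sw \<sigma> \<gamma> e n u \<phi>"
    using PS_D[OF p] by blast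
  interpret I: sw \<sigma> \<gamma> e n u \<phi> by (rule s)
  have W: "fW p = I.w" unfolding pe fW_def I.X_W by simp
  have P: "fP p = I.psi" unfolding pe fP_def I.X_P by simp
  have E: "fE p = I.Ef" unfolding pe fE_def I.X_E by simp
  have v: "fv p = I.v" unfolding pe fv_def I.X_v by simp
  have Z: "fZ p = I.Zf" unfolding pe fZ_def I.X_Z by simp
  have fe: "fst p = e" unfolding pe by simp
  have K: "fK p x = I.Kf x" by (simp only: fK_def W v fe I.X_K)
  show "smooth_fun (fW p)" unfolding W by (rule I.sm_w)
  show "smooth_fun (fP p)" unfolding P by (rule I.sm_psi)
  show "smooth_fun (fE p)" unfolding E by (rule I.sm_Ef)
  show "smooth_fun (fv p)" unfolding v by (rule I.sm_v)
  show "smooth_fun (fZ p)" unfolding Z by (rule I.sm_Zf[OF g])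
  show "deriv (fW p) x = deriv (fP p) x * fZ p x" unfolding W P Z I.R1[OF g] ..
  show "(deriv ^^ 3) (fP p) x = fE p x * deriv (fP p) x + deriv (fW p) x * fK p x"
    unfolding P E W K I.R3 ..
  show "deriv (fE p) x = (1 + fst p * fE p x) * deriv (fP p) x" unfolding E P fe I.R4 ..
  show "deriv (fv p) x = (- fst p) * (deriv (fW p) x * (fv p x * fv p x))" unfolding v W fe I.R5 ..
  show "deriv (fZ p) x = fst p * ((3 * (cc (fst p))\<^sup>2 * (fv p x * fv p x) - \<sigma>) * (deriv (fW p) x * (fv p x * fv p x * (fZ p x * fZ p x))))"
    unfolding Z v W fe I.R6[OF g] ..
qed

end

context par begin

lemma fam_base:
  assumes p: "p \<in> PS" and x: "x \<ge> 0"
  shows "\<bar>fW p x\<bar> \<le> Wd * exp (- kap * x)"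
    "\<bar>fP p x\<bar> \<le> (11 / 10 * Wd) * exp (- kap * x)"
    "\<bar>deriv (fP p) x\<bar> \<le> (11 / 10 * aa * Wd) * exp (- kap * x)"
    "\<bar>deriv (deriv (fP p)) x\<bar> \<le> (Gc * Wd) * exp (- kap * x)"
    "\<bar>fE p x\<bar> \<le> (33 / 10 * Wd) * exp (- kap * x)"
    "\<bar>fv p x\<bar> \<le> 1"
    "\<bar>fZ p x\<bar> \<le> 10 / 9"
proof -
  obtain e n u \<phi> where pe: "p = (e, n, u, \<phi>)" and g: "good e" and s: "sw \<sigma> \<gamma> e n u \<phi>"
    using PS_D[OF p] by blast
  interpret I: sw \<sigma> \<gamma> e n u \<phi> by (rule s)
  have W: "fW p = I.w" unfolding pe fW_def I.X_W by simp
  have P: "fP p = I.psi" unfolding pe fP_def I.X_P by simp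
  have E: "fE p = I.Ef" unfolding pe fE_def I.X_E by simp
  have v: "fv p = I.v" unfolding pe fv_def I.X_v by simp
  have Z: "fZ p = I.Zf" unfolding pe fZ_def I.X_Z by simp
  show "\<bar>fW p x\<bar> \<le> Wd * exp (- kap * x)" unfolding W by (rule I.b_w[OF g x])
  show "\<bar>fP p x\<bar> \<le> (11 / 10 * Wd) * exp (- kap * x)" unfolding P by (rule I.b_psi[OF g x])
  show "\<bar>deriv (fP p) x\<bar> \<le> (11 / 10 * aa * Wd) * exp (- kap * x)" unfolding P by (rule I.b_dpsi[OF g x])
  show "\<bar>deriv (deriv (fP p)) x\<bar> \<le> (Gc * Wd) * exp (- kap * x)" unfolding P by (rule I.b_ddpsi[OF g x])
  show "\<bar>fE p x\<bar> \<le> (33 / 10 * Wd) * exp (- kap * x)" unfolding E by (rule I.b_Ef[OF g x])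
  show "\<bar>fv p x\<bar> \<le> 1" unfolding v by (rule I.b_v[OF g])
  show "\<bar>fZ p x\<bar> \<le> 10 / 9" unfolding Z by (rule I.b_Z[OF g])
qed

lemma smW: "sm PS fW" and smP: "sm PS fP" and smE: "sm PS fE" and smv: "sm PS fv" and smZ: "sm PS fZ"
  unfolding sm_def using fam_facts by auto

lemma sc_e: "p \<in> PS \<Longrightarrow> \<bar>fst p\<bar> \<le> 1" using PS_e by fastforce
lemma sc_me: "p \<in> PS \<Longrightarrow> \<bar>- fst p\<bar> \<le> 1" using PS_e by fastforce
lemma sc_c2: "p \<in> PS \<Longrightarrow> \<bar>- (cc (fst p))\<^sup>2\<bar> \<le> (V + \<gamma>)\<^sup>2"
proof -
  assume p: "p \<in> PS"
  have "0 \<le> cc (fst p)" "cc (fst p) \<le> V + \<gamma>" unfolding cc_def using PS_e[OF p] V1 gam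
    by (auto intro: mult_left_le)
  then show ?thesis by (simp add: power_mono)
qed
lemma sc_K0: "p \<in> PS \<Longrightarrow> \<bar>2 * V * \<gamma> + \<gamma>\<^sup>2 * fst p\<bar> \<le> 2 * V * \<gamma> + \<gamma>\<^sup>2"
proof -
  assume p: "p \<in> PS"
  have "\<gamma>\<^sup>2 * fst p \<le> \<gamma>\<^sup>2" "0 \<le> \<gamma>\<^sup>2 * fst p" using PS_e[OF p] by (auto intro: mult_left_le)
  then show ?thesis using V1 gam by simp
qed
lemma sc_Z: "p \<in> PS \<Longrightarrow> \<bar>fst p * 3 * (cc (fst p))\<^sup>2\<bar> \<le> 3 * (V + \<gamma>)\<^sup>2"
proof -
  assume p: "p \<in> PS"
  have "0 \<le> cc (fst p)" "cc (fst p) \<le> V + \<gamma>" unfolding cc_def using PS_e[OF p] V1 gam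
    by (auto intro: mult_left_le)
  then have "(cc (fst p))\<^sup>2 \<le> (V + \<gamma>)\<^sup>2" by (simp add: power_mono)
  moreover have "0 < fst p" "fst p \<le> 1" using PS_e[OF p] by auto
  ultimately have "fst p * (cc (fst p))\<^sup>2 \<le> 1 * (V + \<gamma>)\<^sup>2" by (intro mult_mono) auto
  then show ?thesis using \<open>0 < fst p\<close> by (simp add: abs_mult)
qed
lemma sc_es: "p \<in> PS \<Longrightarrow> \<bar>- (fst p * \<sigma>)\<bar> \<le> \<sigma>"
proof -
  assume p: "p \<in> PS"
  have "fst p * \<sigma> \<le> \<sigma>" "0 \<le> fst p * \<sigma>" using PS_e[OF p] sig by (auto intro: mult_left_le_one_le)
  then show ?thesis by simp
qed

end

context par begin

lemma kap0: "kap \<ge> 0" using kap_pos by simp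

lemma smK: "sm PS fK"
proof -
  have s1: "sm PS (\<lambda>p x. fv p x * fv p x)" by (rule sm_mult[OF smv smv])
  have s2: "sm PS (\<lambda>p x. fv p x * fv p x + fv p x)" by (rule sm_add[OF s1 smv])
  have s3: "sm PS (\<lambda>p x. fv p x * fv p x + fv p x + 1)" by (rule sm_add[OF s2 sm_const])
  have s4: "sm PS (\<lambda>p x. fv p x * (fv p x * fv p x + fv p x + 1))" by (rule sm_mult[OF smv s3])
  have s5: "sm PS (\<lambda>p x. fW p x * (fv p x * (fv p x * fv p x + fv p x + 1)))" by (rule sm_mult[OF smW s4])
  have s6: "sm PS (\<lambda>p x. fW p x * fv p x)" by (rule sm_mult[OF smW smv])
  have s7: "sm PS (\<lambda>p x. (- (cc (fst p))\<^sup>2) * (fW p x * (fv p x * (fv p x * fv p x + fv p x + 1))))"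
    by (rule sm_cmult[OF s5])
  have s8: "sm PS (\<lambda>p x. \<sigma> * (fW p x * fv p x))" by (rule sm_cmult[OF s6])
  have "sm PS (\<lambda>p x. (2 * V * \<gamma> + \<gamma>\<^sup>2 * fst p) + (- (cc (fst p))\<^sup>2) * (fW p x * (fv p x * (fv p x * fv p x + fv p x + 1))) + \<sigma> * (fW p x * fv p x))"
    by (rule sm_add[OF sm_add[OF sm_const s7] s8])
  then show ?thesis unfolding fK_def[abs_def] .
qed

lemma bdu_K: "bdu PS fW kap m \<Longrightarrow> bdu PS fv 0 m \<Longrightarrow> bdu PS fK 0 m"
proof -
  assume bw: "bdu PS fW kap m" and bv: "bdu PS fv 0 m"
  have bw0: "bdu PS fW 0 m" by (rule bdu_mono[OF kap0 bw])
  have s1: "sm PS (\<lambda>p x. fv p x * fv p x)" by (rule sm_mult[OF smv smv])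
  have s2: "sm PS (\<lambda>p x. fv p x * fv p x + fv p x)" by (rule sm_add[OF s1 smv])
  have s3: "sm PS (\<lambda>p x. fv p x * fv p x + fv p x + 1)" by (rule sm_add[OF s2 sm_const])
  have s4: "sm PS (\<lambda>p x. fv p x * (fv p x * fv p x + fv p x + 1))" by (rule sm_mult[OF smv s3])
  have s5: "sm PS (\<lambda>p x. fW p x * (fv p x * (fv p x * fv p x + fv p x + 1)))" by (rule sm_mult[OF smW s4])
  have s6: "sm PS (\<lambda>p x. fW p x * fv p x)" by (rule sm_mult[OF smW smv])
  have b1: "bdu PS (\<lambda>p x. fv p x * fv p x) 0 m" by (rule bdu_mult[OF smv smv bv bv]) simp
  have b2: "bdu PS (\<lambda>p x. fv p x * fv p x + fv p x) 0 m" by (rule bdu_add[OF s1 smv b1 bv])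
  have b3: "bdu PS (\<lambda>p x. fv p x * fv p x + fv p x + 1) 0 m"
    by (rule bdu_add[OF s2 sm_const b2 bdu_const[of PS "\<lambda>p. 1" 1]]) simp
  have b4: "bdu PS (\<lambda>p x. fv p x * (fv p x * fv p x + fv p x + 1)) 0 m" by (rule bdu_mult[OF smv s3 bv b3]) simp
  have b5: "bdu PS (\<lambda>p x. fW p x * (fv p x * (fv p x * fv p x + fv p x + 1))) 0 m"
    by (rule bdu_mult[OF smW s4 bw0 b4]) simp
  have b6: "bdu PS (\<lambda>p x. fW p x * fv p x) 0 m" by (rule bdu_mult[OF smW smv bw0 bv]) simp
  have b7: "bdu PS (\<lambda>p x. (- (cc (fst p))\<^sup>2) * (fW p x * (fv p x * (fv p x * fv p x + fv p x + 1)))) 0 m"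
    by (rule bdu_cmult[OF s5 b5 sc_c2])
  have b8: "bdu PS (\<lambda>p x. \<sigma> * (fW p x * fv p x)) 0 m"
    by (rule bdu_cmult[OF s6 b6, of "\<lambda>p. \<sigma>" \<sigma>]) (use sig in simp)
  have b9: "bdu PS (\<lambda>p x. 2 * V * \<gamma> + \<gamma>\<^sup>2 * fst p) 0 m" by (rule bdu_const[OF sc_K0])
  have s7: "sm PS (\<lambda>p x. (- (cc (fst p))\<^sup>2) * (fW p x * (fv p x * (fv p x * fv p x + fv p x + 1))))"
    by (rule sm_cmult[OF s5])
  have s8: "sm PS (\<lambda>p x. \<sigma> * (fW p x * fv p x))" by (rule sm_cmult[OF s6])
  have b10: "bdu PS (\<lambda>p x. (2 * V * \<gamma> + \<gamma>\<^sup>2 * fst p) + (- (cc (fst p))\<^sup>2) * (fW p x * (fv p x * (fv p x * fv p x + fv p x + 1)))) 0 m"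
    by (rule bdu_add[OF sm_const s7 b9 b7])
  have b11: "bdu PS (\<lambda>p x. (2 * V * \<gamma> + \<gamma>\<^sup>2 * fst p) + (- (cc (fst p))\<^sup>2) * (fW p x * (fv p x * (fv p x * fv p x + fv p x + 1))) + \<sigma> * (fW p x * fv p x)) 0 m"
    by (rule bdu_add[OF sm_add[OF sm_const s7] s8 b10 b8])
  then show ?thesis unfolding fK_def[abs_def] .
qed

end

context par begin

lemma bdu_upto: "(\<And>j. j < k \<Longrightarrow> bd P f a j) \<Longrightarrow> bd P f a k \<Longrightarrow> bdu P f a k"
  unfolding bdu_def using le_neq_implies_less by blast

lemma all_bounds: "bd PS fW kap k \<and> bd PS fP kap k \<and> bd PS fE kap k \<and> bd PS fv 0 k \<and> bd PS fZ 0 k"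
proof (induction k rule: less_induct)
  case (less k)
  have IW: "m < k \<Longrightarrow> bdu PS fW kap m" for m by (rule bdu_lessI) (use less.IH in auto)
  have IP: "m < k \<Longrightarrow> bdu PS fP kap m" for m by (rule bdu_lessI) (use less.IH in auto)
  have IE: "m < k \<Longrightarrow> bdu PS fE kap m" for m by (rule bdu_lessI) (use less.IH in auto)
  have Iv: "m < k \<Longrightarrow> bdu PS fv 0 m" for m by (rule bdu_lessI) (use less.IH in auto)
  have IZ: "m < k \<Longrightarrow> bdu PS fZ 0 m" for m by (rule bdu_lessI) (use less.IH in auto)
  have smdP: "sm PS (\<lambda>p. deriv (fP p))" by (rule sm_deriv[OF smP])
  have smdW: "sm PS (\<lambda>p. deriv (fW p))" by (rule sm_deriv[OF smW])
  have BP: "bd PS fP kap k"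
  proof -
    consider "k = 0" | "k = 1" | "k = 2" | m where "k = m + 3"
    proof -
      assume a: "k = 0 \<Longrightarrow> thesis" "k = 1 \<Longrightarrow> thesis" "k = 2 \<Longrightarrow> thesis" "\<And>m. k = m + 3 \<Longrightarrow> thesis"
      show thesis
      proof (cases "k \<ge> 3")
        case True
        then have "k = (k - 3) + 3" by simp
        then show thesis by (rule a(4))
      next
        case False
        then have "k = 0 \<or> k = 1 \<or> k = 2" by auto
        then show thesis using a(1-3) by blast
      qed
    qed
    then show ?thesis
    proof cases
      case 1
      have "bd PS fP kap 0" by (rule bd0I) (use fam_base(2) in blast)
      then show ?thesis using 1 by simp
    next
      case 2
      have "bd PS (\<lambda>p. deriv (fP p)) kap 0" by (rule bd0I) (use fam_base(3) in blast)
      then show ?thesis using 2 by (simp add: bd_deriv)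
    next
      case 3
      have "bd PS (\<lambda>p. deriv (deriv (fP p))) kap 0" by (rule bd0I) (use fam_base(4) in blast)
      then have "bd PS (\<lambda>p. deriv (fP p)) kap 1" using bd_deriv[of PS "\<lambda>p. deriv (fP p)" kap 0] by simp
      then show ?thesis using 3 bd_deriv[of PS fP kap 1] by (simp add: numeral_2_eq_2)
    next
      case 4
      have m1: "m < k" "Suc m < k" using 4 by auto
      have t1: "bdu PS (\<lambda>p x. fE p x * deriv (fP p) x) kap m"
        by (rule bdu_mult[OF smE smdP IE[OF m1(1)] bdu_deriv[OF IP[OF m1(2)]]]) (use kap0 in simp)
      have t2: "bdu PS (\<lambda>p x. deriv (fW p) x * fK p x) kap m"
        by (rule bdu_mult[OF smdW smK bdu_deriv[OF IW[OF m1(2)]] bdu_K[OF IW[OF m1(1)] Iv[OF m1(1)]]]) simp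
      have "bd PS (\<lambda>p x. fE p x * deriv (fP p) x + deriv (fW p) x * fK p x) kap m"
        by (rule bd_add[OF sm_mult[OF smE smdP] sm_mult[OF smdW smK] bdu_bd[OF t1] bdu_bd[OF t2]]) auto
      then have "bd PS (\<lambda>p. (deriv ^^ 3) (fP p)) kap m"
        by (subst bd_cong[where g = "\<lambda>p x. fE p x * deriv (fP p) x + deriv (fW p) x * fK p x"]) (use fam_facts(7) in auto)
      then show ?thesis using 4 bd_shift by blast
    qed
  qed
  have BPu: "bdu PS fP kap k" by (rule bdu_upto[OF _ BP]) (use less.IH in auto)
  have BW: "bd PS fW kap k"
  proof (cases k)
    case 0
    have "bd PS fW kap 0" by (rule bd0I) (use fam_base(1) in blast)
    then show ?thesis using 0 by simp
  next
    case (Suc m)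
    have m1: "m < k" using Suc by auto
    have t: "bdu PS (\<lambda>p x. deriv (fP p) x * fZ p x) kap m"
      by (rule bdu_mult[OF smdP smZ bdu_deriv IZ[OF m1]]) (use BPu Suc in auto)
    have "bd PS (\<lambda>p. deriv (fW p)) kap m"
      by (subst bd_cong[where g = "\<lambda>p x. deriv (fP p) x * fZ p x"]) (use fam_facts(6) bdu_bd[OF t] in auto)
    then show ?thesis using Suc bd_deriv by blast
  qed
  have BWu: "bdu PS fW kap k" by (rule bdu_upto[OF _ BW]) (use less.IH in auto)
  have BE: "bd PS fE kap k"
  proof (cases k)
    case 0
    have "bd PS fE kap 0" by (rule bd0I) (use fam_base(5) in blast)
    then show ?thesis using 0 by simp
  next
    case (Suc m)
    have m1: "m < k" using Suc by auto
    have a1: "bdu PS (\<lambda>p x. fst p * fE p x) 0 m"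
      by (rule bdu_cmult[OF smE bdu_mono[OF kap0 IE[OF m1]] sc_e])
    have a2: "bdu PS (\<lambda>p x. 1 + fst p * fE p x) 0 m"
      by (rule bdu_add[OF sm_const sm_cmult[OF smE] bdu_const[of PS "\<lambda>p. 1" 1] a1]) simp
    have t: "bdu PS (\<lambda>p x. (1 + fst p * fE p x) * deriv (fP p) x) kap m"
      by (rule bdu_mult[OF sm_add[OF sm_const sm_cmult[OF smE]] smdP a2 bdu_deriv]) (use BPu Suc in auto)
    have "bd PS (\<lambda>p. deriv (fE p)) kap m"
      by (subst bd_cong[where g = "\<lambda>p x. (1 + fst p * fE p x) * deriv (fP p) x"]) (use fam_facts(8) bdu_bd[OF t] in auto)
    then show ?thesis using Suc bd_deriv by blast
  qed
  have Bv: "bd PS fv 0 k"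
  proof (cases k)
    case 0
    have "bd PS fv 0 0" by (rule bd0I[where C = 1]) (use fam_base(6) in simp)
    then show ?thesis using 0 by simp
  next
    case (Suc m)
    have m1: "m < k" using Suc by auto
    have a1: "bdu PS (\<lambda>p x. fv p x * fv p x) 0 m" by (rule bdu_mult[OF smv smv Iv[OF m1] Iv[OF m1]]) simp
    have a2: "bdu PS (\<lambda>p x. deriv (fW p) x * (fv p x * fv p x)) 0 m"
      by (rule bdu_mult[OF smdW sm_mult[OF smv smv] bdu_deriv a1]) (use BWu Suc kap0 in auto)
    have t: "bdu PS (\<lambda>p x. (- fst p) * (deriv (fW p) x * (fv p x * fv p x))) 0 m"
      by (rule bdu_cmult[OF sm_mult[OF smdW sm_mult[OF smv smv]] a2 sc_me])
    have "bd PS (\<lambda>p. deriv (fv p)) 0 m"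
      by (subst bd_cong[where g = "\<lambda>p x. (- fst p) * (deriv (fW p) x * (fv p x * fv p x))"]) (use fam_facts(9) bdu_bd[OF t] in auto)
    then show ?thesis using Suc bd_deriv by blast
  qed
  have BZ: "bd PS fZ 0 k"
  proof (cases k)
    case 0
    have "bd PS fZ 0 0" by (rule bd0I[where C = "10 / 9"]) (use fam_base(7) in simp)
    then show ?thesis using 0 by simp
  next
    case (Suc m)
    have m1: "m < k" using Suc by auto
    have v2: "bdu PS (\<lambda>p x. fv p x * fv p x) 0 m" by (rule bdu_mult[OF smv smv Iv[OF m1] Iv[OF m1]]) simp
    have z2: "bdu PS (\<lambda>p x. fZ p x * fZ p x) 0 m" by (rule bdu_mult[OF smZ smZ IZ[OF m1] IZ[OF m1]]) simp
    have vz: "bdu PS (\<lambda>p x. fv p x * fv p x * (fZ p x * fZ p x)) 0 m"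
      by (rule bdu_mult[OF sm_mult[OF smv smv] sm_mult[OF smZ smZ] v2 z2]) simp
    have wvz: "bdu PS (\<lambda>p x. deriv (fW p) x * (fv p x * fv p x * (fZ p x * fZ p x))) 0 m"
      by (rule bdu_mult[OF smdW sm_mult[OF sm_mult[OF smv smv] sm_mult[OF smZ smZ]] bdu_deriv vz]) (use BWu Suc kap0 in auto)
    have c1: "bdu PS (\<lambda>p x. (fst p * 3 * (cc (fst p))\<^sup>2) * (fv p x * fv p x)) 0 m"
      by (rule bdu_cmult[OF sm_mult[OF smv smv] v2 sc_Z])
    have c2: "bdu PS (\<lambda>p x. (fst p * 3 * (cc (fst p))\<^sup>2) * (fv p x * fv p x) + (- (fst p * \<sigma>))) 0 m"
      by (rule bdu_add[OF sm_cmult[OF sm_mult[OF smv smv]] sm_const c1 bdu_const[OF sc_es]])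
    have t: "bdu PS (\<lambda>p x. ((fst p * 3 * (cc (fst p))\<^sup>2) * (fv p x * fv p x) + (- (fst p * \<sigma>))) * (deriv (fW p) x * (fv p x * fv p x * (fZ p x * fZ p x)))) 0 m"
      by (rule bdu_mult[OF sm_add[OF sm_cmult[OF sm_mult[OF smv smv]] sm_const] sm_mult[OF smdW sm_mult[OF sm_mult[OF smv smv] sm_mult[OF smZ smZ]]] c2 wvz]) simp
    have eq: "deriv (fZ p) x = ((fst p * 3 * (cc (fst p))\<^sup>2) * (fv p x * fv p x) + (- (fst p * \<sigma>))) * (deriv (fW p) x * (fv p x * fv p x * (fZ p x * fZ p x)))"
      if "p \<in> PS" for p x
      using fam_facts(10)[OF that, of x] by (simp add: algebra_simps)
    have "bd PS (\<lambda>p. deriv (fZ p)) 0 m"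
      by (subst bd_cong[where g = "\<lambda>p x. ((fst p * 3 * (cc (fst p))\<^sup>2) * (fv p x * fv p x) + (- (fst p * \<sigma>))) * (deriv (fW p) x * (fv p x * fv p x * (fZ p x * fZ p x)))"])
         (use eq bdu_bd[OF t] in auto)
    then show ?thesis using Suc bd_deriv by blast
  qed
  show ?case using BW BP BE Bv BZ by blast
qed

end

context par begin

lemma bd_all_W: "bd PS fW kap k" using all_bounds by blast
lemma bd_all_P: "bd PS fP kap k" using all_bounds by blast
lemma bd_all_v: "bd PS fv 0 k" using all_bounds by blast

lemma bd_N: "bd PS (\<lambda>p x. (- 1) * deriv (fP p) x) kap k"
proof -
  have "bd PS (\<lambda>p. deriv (fP p)) kap k" using bd_all_P[of "Suc k"] by (simp add: bd_deriv)
  then show ?thesis by (rule bd_cmult[OF sm_deriv[OF smP], of _ _ "\<lambda>p. - 1" 1]) simp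
qed

lemma bd_U: "bd PS (\<lambda>p x. cc (fst p) * (fW p x * fv p x)) kap k"
proof -
  have "bdu PS (\<lambda>p x. fW p x * fv p x) kap k"
    by (rule bdu_mult[OF smW smv, of kap k 0]) (auto simp: bdu_def bd_all_W bd_all_v)
  then have "bd PS (\<lambda>p x. fW p x * fv p x) kap k" by (simp add: bdu_def)
  moreover have "\<bar>cc (fst p)\<bar> \<le> V + \<gamma>" if "p \<in> PS" for p
  proof -
    have "0 \<le> cc (fst p)" "cc (fst p) \<le> V + \<gamma>" unfolding cc_def using PS_e[OF that] V1 gam
      by (auto intro: mult_left_le)
    then show ?thesis by simp
  qed
  ultimately show ?thesis by (rule bd_cmult[OF sm_mult[OF smW smv]])
qed

lemma main_bounds: "\<exists>C. \<forall>p\<in>PS. \<forall>x\<ge>0.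
   \<bar>(deriv ^^ k) (fW p) x\<bar> + \<bar>(deriv ^^ k) (\<lambda>x. (- 1) * deriv (fP p) x) x\<bar> \<le> C * exp (- kap * x) \<and>
   \<bar>(deriv ^^ k) (\<lambda>x. cc (fst p) * (fW p x * fv p x)) x\<bar> + \<bar>(deriv ^^ k) (fP p) x\<bar> \<le> C * exp (- kap * x)"
proof -
  obtain C1 where c1: "\<forall>p\<in>PS. \<forall>x\<ge>0. \<bar>(deriv ^^ k) (fW p) x\<bar> \<le> C1 * exp (- kap * x)"
    using bd_all_W[of k] unfolding bd_def by blast
  obtain C2 where c2: "\<forall>p\<in>PS. \<forall>x\<ge>0. \<bar>(deriv ^^ k) (\<lambda>x. (- 1) * deriv (fP p) x) x\<bar> \<le> C2 * exp (- kap * x)"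
    using bd_N[of k] unfolding bd_def by blast
  obtain C3 where c3: "\<forall>p\<in>PS. \<forall>x\<ge>0. \<bar>(deriv ^^ k) (\<lambda>x. cc (fst p) * (fW p x * fv p x)) x\<bar> \<le> C3 * exp (- kap * x)"
    using bd_U[of k] unfolding bd_def by blast
  obtain C4 where c4: "\<forall>p\<in>PS. \<forall>x\<ge>0. \<bar>(deriv ^^ k) (fP p) x\<bar> \<le> C4 * exp (- kap * x)"
    using bd_all_P[of k] unfolding bd_def by blast
  define C where "C = \<bar>C1\<bar> + \<bar>C2\<bar> + \<bar>C3\<bar> + \<bar>C4\<bar>"
  have "\<forall>p\<in>PS. \<forall>x\<ge>0.
   \<bar>(deriv ^^ k) (fW p) x\<bar> + \<bar>(deriv ^^ k) (\<lambda>x. (- 1) * deriv (fP p) x) x\<bar> \<le> C * exp (- kap * x) \<and>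
   \<bar>(deriv ^^ k) (\<lambda>x. cc (fst p) * (fW p x * fv p x)) x\<bar> + \<bar>(deriv ^^ k) (fP p) x\<bar> \<le> C * exp (- kap * x)"
  proof (intro ballI allI impI conjI)
    fix p x assume p: "p \<in> PS" and x: "(0::real) \<le> x"
    have ex: "exp (- kap * x) > 0" by simp
    have a1: "C1 * exp (- kap * x) \<le> \<bar>C1\<bar> * exp (- kap * x)" using ex by (intro mult_right_mono) auto
    have a2: "C2 * exp (- kap * x) \<le> \<bar>C2\<bar> * exp (- kap * x)" using ex by (intro mult_right_mono) auto
    have a3: "C3 * exp (- kap * x) \<le> \<bar>C3\<bar> * exp (- kap * x)" using ex by (intro mult_right_mono) auto
    have a4: "C4 * exp (- kap * x) \<le> \<bar>C4\<bar> * exp (- kap * x)" using ex by (intro mult_right_mono) auto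
    have z: "0 \<le> \<bar>C3\<bar> * exp (- kap * x)" "0 \<le> \<bar>C4\<bar> * exp (- kap * x)"
      "0 \<le> \<bar>C1\<bar> * exp (- kap * x)" "0 \<le> \<bar>C2\<bar> * exp (- kap * x)" using ex by auto
    have e: "C * exp (- kap * x) = \<bar>C1\<bar> * exp (- kap * x) + \<bar>C2\<bar> * exp (- kap * x) + \<bar>C3\<bar> * exp (- kap * x) + \<bar>C4\<bar> * exp (- kap * x)"
      unfolding C_def by (simp add: distrib_right)
    have i1: "\<bar>(deriv ^^ k) (fW p) x\<bar> \<le> C1 * exp (- kap * x)" using c1 p x by blast
    have i2: "\<bar>(deriv ^^ k) (\<lambda>x. (- 1) * deriv (fP p) x) x\<bar> \<le> C2 * exp (- kap * x)" using c2 p x by blast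
    have i3: "\<bar>(deriv ^^ k) (\<lambda>x. cc (fst p) * (fW p x * fv p x)) x\<bar> \<le> C3 * exp (- kap * x)" using c3 p x by blast
    have i4: "\<bar>(deriv ^^ k) (fP p) x\<bar> \<le> C4 * exp (- kap * x)" using c4 p x by blast
    show "\<bar>(deriv ^^ k) (fW p) x\<bar> + \<bar>(deriv ^^ k) (\<lambda>x. (- 1) * deriv (fP p) x) x\<bar> \<le> C * exp (- kap * x)"
      unfolding e using i1 i2 a1 a2 z by linarith
    show "\<bar>(deriv ^^ k) (\<lambda>x. cc (fst p) * (fW p x * fv p x)) x\<bar> + \<bar>(deriv ^^ k) (fP p) x\<bar> \<le> C * exp (- kap * x)"
      unfolding e using i3 i4 a3 a4 z by linarith
  qed
  then show ?thesis by blast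
qed

end

theorem proposition4p3:
  fixes \<sigma> \<gamma> :: real
  assumes "\<sigma> \<ge> 0" and "\<gamma> > 0"
  shows "\<exists>C_star \<epsilon>1 :: real. C_star > 0 \<and> \<epsilon>1 > 0 \<and>
           (\<exists>C :: nat \<Rightarrow> real. (\<forall>k. C k > 0) \<and>
             (\<forall>\<epsilon> n u \<phi>. 0 < \<epsilon> \<and> \<epsilon> < \<epsilon>1 \<and> solitary_wave \<sigma> \<gamma> \<epsilon> n u \<phi> \<longrightarrow>
               (\<forall>k \<xi>. \<xi> \<ge> 0 \<longrightarrow>
                  \<bar>(deriv ^^ k) (\<lambda>x. (n x - 1) / \<epsilon>) \<xi>\<bar>
                    + \<bar>(deriv ^^ k) (\<lambda>x. - deriv \<phi> x / \<epsilon>) \<xi>\<bar> \<le> C k * exp (- C_star * \<xi>) \<and>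
                  \<bar>(deriv ^^ k) u \<xi>\<bar> / \<epsilon> + \<bar>(deriv ^^ k) \<phi> \<xi>\<bar> / \<epsilon>
                    \<le> C k * exp (- C_star * \<xi>))))"
proof -
  interpret par \<sigma> \<gamma> using assms by unfold_locales
  obtain e1 where e1: "e1 > 0" "\<And>e. 0 < e \<Longrightarrow> e < e1 \<Longrightarrow> good e" using good_exists by blast
  have "\<forall>k. \<exists>C. \<forall>p\<in>PS. \<forall>x\<ge>0.
   \<bar>(deriv ^^ k) (fW p) x\<bar> + \<bar>(deriv ^^ k) (\<lambda>x. (- 1) * deriv (fP p) x) x\<bar> \<le> C * exp (- kap * x) \<and>
   \<bar>(deriv ^^ k) (\<lambda>x. cc (fst p) * (fW p x * fv p x)) x\<bar> + \<bar>(deriv ^^ k) (fP p) x\<bar> \<le> C * exp (- kap * x)"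
    using main_bounds by blast
  then have "\<exists>Cf. \<forall>k. \<forall>p\<in>PS. \<forall>x\<ge>0.
   \<bar>(deriv ^^ k) (fW p) x\<bar> + \<bar>(deriv ^^ k) (\<lambda>x. (- 1) * deriv (fP p) x) x\<bar> \<le> Cf k * exp (- kap * x) \<and>
   \<bar>(deriv ^^ k) (\<lambda>x. cc (fst p) * (fW p x * fv p x)) x\<bar> + \<bar>(deriv ^^ k) (fP p) x\<bar> \<le> Cf k * exp (- kap * x)"
    by (rule choice)
  then obtain Cf where Cf: "\<And>k. \<forall>p\<in>PS. \<forall>x\<ge>0.
   \<bar>(deriv ^^ k) (fW p) x\<bar> + \<bar>(deriv ^^ k) (\<lambda>x. (- 1) * deriv (fP p) x) x\<bar> \<le> Cf k * exp (- kap * x) \<and>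
   \<bar>(deriv ^^ k) (\<lambda>x. cc (fst p) * (fW p x * fv p x)) x\<bar> + \<bar>(deriv ^^ k) (fP p) x\<bar> \<le> Cf k * exp (- kap * x)"
    by blast
  define C where "C k = \<bar>Cf k\<bar> + 1" for k
  show ?thesis
  proof (intro exI conjI allI impI)
    show "kap > 0" by (rule kap_pos)
    show "e1 > 0" by (rule e1(1))
    show "C k > 0" for k unfolding C_def by simp
  next
    fix \<epsilon> n u \<phi> k and \<xi> :: real
    assume H: "0 < \<epsilon> \<and> \<epsilon> < e1 \<and> solitary_wave \<sigma> \<gamma> \<epsilon> n u \<phi>" and xi: "0 \<le> \<xi>"
    have g: "good \<epsilon>" using e1(2) H by blast
    define p where "p = (\<epsilon>, n, u, \<phi>)"
    have pPS: "p \<in> PS" unfolding PS_def p_def using g H by simp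
    have sI: "sw \<sigma> \<gamma> \<epsilon> n u \<phi>" using assms H by unfold_locales auto
    interpret I: sw \<sigma> \<gamma> \<epsilon> n u \<phi> by (rule sI)
    have W: "fW p = I.w" unfolding p_def fW_def I.X_W by simp
    have P: "fP p = I.psi" unfolding p_def fP_def I.X_P by simp
    have v: "fv p = I.v" unfolding p_def fv_def I.X_v by simp
    have fe: "fst p = \<epsilon>" unfolding p_def by simp
    have eW: "(\<lambda>x. (n x - 1) / \<epsilon>) = fW p" unfolding W I.X_W ..
    have eN: "(\<lambda>x. - deriv \<phi> x / \<epsilon>) = (\<lambda>x. (- 1) * deriv (fP p) x)"
      unfolding P I.deriv_psi_fun by simp
    have su_u: "su k u" using I.sm_u smooth_su by blast
    have su_phi: "su k \<phi>" using I.sm_phi smooth_su by blast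
    have eU: "\<bar>(deriv ^^ k) u \<xi>\<bar> / \<epsilon> = \<bar>(deriv ^^ k) (\<lambda>x. cc (fst p) * (fW p x * fv p x)) \<xi>\<bar>"
    proof -
      have "(\<lambda>x. cc (fst p) * (fW p x * fv p x)) = (\<lambda>x. (1 / \<epsilon>) * u x)"
        unfolding fe W v using I.u_eps by (intro ext) simp
      moreover have "(deriv ^^ k) (\<lambda>x. (1 / \<epsilon>) * u x) = (\<lambda>x. (1 / \<epsilon>) * (deriv ^^ k) u x)"
        by (rule hd_cmult[OF su_u]) simp
      ultimately show ?thesis using H by (simp add: abs_mult)
    qed
    have eP: "\<bar>(deriv ^^ k) \<phi> \<xi>\<bar> / \<epsilon> = \<bar>(deriv ^^ k) (fP p) \<xi>\<bar>"
    proof -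
      have "fP p = (\<lambda>x. (1 / \<epsilon>) * \<phi> x)" unfolding P I.X_P by simp
      moreover have "(deriv ^^ k) (\<lambda>x. (1 / \<epsilon>) * \<phi> x) = (\<lambda>x. (1 / \<epsilon>) * (deriv ^^ k) \<phi> x)"
        by (rule hd_cmult[OF su_phi]) simp
      ultimately show ?thesis using H by (simp add: abs_mult)
    qed
    have b: "\<bar>(deriv ^^ k) (fW p) \<xi>\<bar> + \<bar>(deriv ^^ k) (\<lambda>x. (- 1) * deriv (fP p) x) \<xi>\<bar> \<le> Cf k * exp (- kap * \<xi>) \<and>
       \<bar>(deriv ^^ k) (\<lambda>x. cc (fst p) * (fW p x * fv p x)) \<xi>\<bar> + \<bar>(deriv ^^ k) (fP p) \<xi>\<bar> \<le> Cf k * exp (- kap * \<xi>)"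
      using Cf[of k] pPS xi by blast
    have cc: "Cf k * exp (- kap * \<xi>) \<le> C k * exp (- kap * \<xi>)" unfolding C_def
      by (intro mult_right_mono) auto
    show "\<bar>(deriv ^^ k) (\<lambda>x. (n x - 1) / \<epsilon>) \<xi>\<bar> + \<bar>(deriv ^^ k) (\<lambda>x. - deriv \<phi> x / \<epsilon>) \<xi>\<bar> \<le> C k * exp (- kap * \<xi>)"
      unfolding eW eN using b cc by linarith
    show "\<bar>(deriv ^^ k) u \<xi>\<bar> / \<epsilon> + \<bar>(deriv ^^ k) \<phi> \<xi>\<bar> / \<epsilon> \<le> C k * exp (- kap * \<xi>)"
      unfolding eU eP using b cc by linarith
  qed
qed

end
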